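(* Let $A,B$ be finite-dimensional systems, $\{|j\rangle\}_{j=0}^{|A|-1}$ an orthonormal basis of $A$, $U_0,\dots,U_{|A|-1}$ unitaries on $B$, and $\mathcal C_U(X)=C_UXC_U^\dagger$ with $C_U=\sum_j|j\rangle\langle j|_A\otimes U_j$, viewed as a bipartite channel $AB\to AB$. Then \[ S_\infty[A|B]_{\mathcal C_U}\ge-2\log|A|, \] with equality when the vectors $\{|U_j\rangle\!\rangle\}_j$ are mutually orthogonal, i.e., $\operatorname{tr}(U_i^\dagger U_j)=0$ for all $i\ne j$.
   Context: $\log$ base 2; $\mathrm{St}(X)$ density operators; $\mathrm{Ch}(X',X)$ quantum channels. $|U\rangle\!\rangle:=\sum_i(\mathbb 1\otimes U)|ii\rangle$ denotes vectorization. For a bipartite channel $\mathcal N$ from $A'B'$ to $AB$ (here $A'=A$, $B'=B$): $\mathcal R^{\mathbb 1}_{A'\to A}(X):=\operatorname{tr}(X)\mathbb 1_A$; $D_\infty(\rho\|\sigma):=\log\inf\{\lambda:\rho\le\lambda\sigma\}$; for a channel $\mathcal M$ and CP map $\mathcal M'$, $D_\infty[\mathcal M\|\mathcal M']:=\sup_{\rho\in\mathrm{St}(RX')}D_\infty((\mathrm{id}\otimes\mathcal M)(\rho)\|(\mathrm{id}\otimes\mathcal M')(\rho))$; conditional channel min-entropy $S_\infty[A|B]_{\mathcal N}:=-\inf_{\mathcal Q\in\mathrm{Ch}(B',B)}D_\infty[\mathcal N\|\mathcal R^{\mathbb 1}_{A'\to A}\otimes\mathcal Q]$. *)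

theory Defs
  imports "Jordan_Normal_Form.Matrix" "Jordan_Normal_Form.Conjugate" "HOL-Library.Extended_Real"
begin

text \<open>Finite-dimensional quantum systems are modelled by their dimension d;
operators are complex d x d matrices. Composite systems use the Kronecker
product with the usual ordering (first factor = most significant index).\<close>

definition mtrace :: "complex mat \<Rightarrow> complex" where
  "mtrace A = (\<Sum>i<dim_row A. A $$ (i,i))"

definition adj :: "complex mat \<Rightarrow> complex mat" where
  "adj A = transpose_mat (map_mat cnj A)"

definition kron :: "complex mat \<Rightarrow> complex mat \<Rightarrow> complex mat" where
  "kron A B = mat (dim_row A * dim_row B) (dim_col A * dim_col B)
     (\<lambda>(i,j). A $$ (i div dim_row B, j div dim_col B) * B $$ (i mod dim_row B, j mod dim_col B))"

definition msum :: "nat \<Rightarrow> nat \<Rightarrow> ('i \<Rightarrow> complex mat) \<Rightarrow> 'i set \<Rightarrow> complex mat" where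
  "msum n m f S = mat n m (\<lambda>ij. \<Sum>s\<in>S. f s $$ ij)"

definition psd :: "nat \<Rightarrow> complex mat \<Rightarrow> bool" where
  "psd n X \<longleftrightarrow> X \<in> carrier_mat n n \<and> adj X = X \<and>
     (\<forall>v \<in> carrier_vec n. Im ((X *\<^sub>v v) \<bullet>c v) = 0 \<and> 0 \<le> Re ((X *\<^sub>v v) \<bullet>c v))"

definition density :: "nat \<Rightarrow> complex mat \<Rightarrow> bool" where
  "density n \<rho> \<longleftrightarrow> psd n \<rho> \<and> mtrace \<rho> = 1"

definition eunit :: "nat \<Rightarrow> nat \<Rightarrow> nat \<Rightarrow> complex mat" where
  "eunit d a a' = mat d d (\<lambda>(i,j). if i = a \<and> j = a' then 1 else 0)"

definition block :: "nat \<Rightarrow> complex mat \<Rightarrow> nat \<Rightarrow> nat \<Rightarrow> complex mat" where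
  "block dB X a a' = mat dB dB (\<lambda>(i,j). X $$ (a * dB + i, a' * dB + j))"

text \<open>Tensor product of linear maps Phi (on dA x dA) and Psi (on dB x dB), both
dimension preserving, acting on dA*dB x dA*dB matrices, defined by linear
extension: (Phi (x) Psi)(X) = sum_{a,a'} Phi(|a><a'|) (x) Psi(X_{aa'}).\<close>
definition map_tensor :: "(complex mat \<Rightarrow> complex mat) \<Rightarrow> (complex mat \<Rightarrow> complex mat)
    \<Rightarrow> nat \<Rightarrow> nat \<Rightarrow> complex mat \<Rightarrow> complex mat" where
  "map_tensor \<Phi> \<Psi> dA dB X = msum (dA * dB) (dA * dB)
     (\<lambda>(a,a'). kron (\<Phi> (eunit dA a a')) (\<Psi> (block dB X a a'))) ({..<dA} \<times> {..<dA})"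

definition lin_map :: "nat \<Rightarrow> (complex mat \<Rightarrow> complex mat) \<Rightarrow> bool" where
  "lin_map d \<Phi> \<longleftrightarrow> (\<forall>X \<in> carrier_mat d d. \<Phi> X \<in> carrier_mat d d) \<and>
     (\<forall>X \<in> carrier_mat d d. \<forall>Y \<in> carrier_mat d d. \<Phi> (X + Y) = \<Phi> X + \<Phi> Y) \<and>
     (\<forall>X \<in> carrier_mat d d. \<forall>c. \<Phi> (c \<cdot>\<^sub>m X) = c \<cdot>\<^sub>m \<Phi> X)"

definition channel :: "nat \<Rightarrow> (complex mat \<Rightarrow> complex mat) \<Rightarrow> bool" where
  "channel d \<Phi> \<longleftrightarrow> lin_map d \<Phi> \<and>
     (\<forall>X \<in> carrier_mat d d. mtrace (\<Phi> X) = mtrace X) \<and>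
     (\<forall>r X. psd (r * d) X \<longrightarrow> psd (r * d) (map_tensor (\<lambda>Y. Y) \<Phi> r d X))"

definition Dmax :: "nat \<Rightarrow> complex mat \<Rightarrow> complex mat \<Rightarrow> ereal" where
  "Dmax n \<rho> \<sigma> = (let L = {l::real. psd n (l \<cdot>\<^sub>m \<sigma> - \<rho>)} in
     if L = {} then \<infinity> else ereal (log 2 (Inf L)))"

definition Dmax_ch :: "nat \<Rightarrow> (complex mat \<Rightarrow> complex mat) \<Rightarrow> (complex mat \<Rightarrow> complex mat) \<Rightarrow> ereal" where
  "Dmax_ch d M M' = (SUP p \<in> {(r, \<rho>). density (r * d) \<rho>}.
      Dmax (fst p * d) (map_tensor (\<lambda>Y. Y) M (fst p) d (snd p))
                       (map_tensor (\<lambda>Y. Y) M' (fst p) d (snd p)))"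

definition repl_id :: "nat \<Rightarrow> complex mat \<Rightarrow> complex mat" where
  "repl_id dA X = mtrace X \<cdot>\<^sub>m 1\<^sub>m dA"

definition cond_min_entropy :: "nat \<Rightarrow> nat \<Rightarrow> (complex mat \<Rightarrow> complex mat) \<Rightarrow> ereal" where
  "cond_min_entropy dA dB N =
     - (INF Q \<in> {Q. channel dB Q}. Dmax_ch (dA * dB) N (map_tensor (repl_id dA) Q dA dB))"

definition unitary :: "nat \<Rightarrow> complex mat \<Rightarrow> bool" where
  "unitary d U \<longleftrightarrow> U \<in> carrier_mat d d \<and> adj U * U = 1\<^sub>m d \<and> U * adj U = 1\<^sub>m d"

definition outer :: "complex vec \<Rightarrow> complex vec \<Rightarrow> complex mat" where
  "outer v w = mat (dim_vec v) (dim_vec w) (\<lambda>(i,j). v $ i * cnj (w $ j))"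

definition ctrl_unitary :: "nat \<Rightarrow> nat \<Rightarrow> (nat \<Rightarrow> complex vec) \<Rightarrow> (nat \<Rightarrow> complex mat) \<Rightarrow> complex mat" where
  "ctrl_unitary dA dB b U = msum (dA * dB) (dA * dB) (\<lambda>j. kron (outer (b j) (b j)) (U j)) {..<dA}"

definition ctrl_channel :: "nat \<Rightarrow> nat \<Rightarrow> (nat \<Rightarrow> complex vec) \<Rightarrow> (nat \<Rightarrow> complex mat) \<Rightarrow> complex mat \<Rightarrow> complex mat" where
  "ctrl_channel dA dB b U X = ctrl_unitary dA dB b U * X * adj (ctrl_unitary dA dB b U)"

end

theory Submission
  imports Defs "Jordan_Normal_Form.Determinant"
begin

definition qff :: "nat \<Rightarrow> (nat \<Rightarrow> nat \<Rightarrow> complex) \<Rightarrow> (nat \<Rightarrow> complex) \<Rightarrow> complex" where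
  "qff n F v = (\<Sum>i<n. \<Sum>j<n. cnj (v i) * F i j * v j)"

definition hermf :: "nat \<Rightarrow> (nat \<Rightarrow> nat \<Rightarrow> complex) \<Rightarrow> bool" where
  "hermf n F \<longleftrightarrow> (\<forall>i<n. \<forall>j<n. F i j = cnj (F j i))"

definition ent :: "complex mat \<Rightarrow> nat \<Rightarrow> nat \<Rightarrow> complex" where "ent X i j = X $$ (i,j)"

lemma qff_cong_v: "(\<And>i. i < n \<Longrightarrow> v i = w i) \<Longrightarrow> qff n F v = qff n F w"
  unfolding qff_def by (intro sum.cong refl) auto

lemma qff_cong_F: "(\<And>i j. i < n \<Longrightarrow> j < n \<Longrightarrow> F i j = G i j) \<Longrightarrow> qff n F v = qff n G v"
  unfolding qff_def by (intro sum.cong refl) auto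

lemma adj_dims[simp]: "dim_row (adj A) = dim_col A" "dim_col (adj A) = dim_row A"
  unfolding adj_def by auto

lemma adj_index[simp]: "i < dim_col A \<Longrightarrow> j < dim_row A \<Longrightarrow> adj A $$ (i,j) = cnj (A $$ (j,i))"
  unfolding adj_def by auto

lemma adj_carrier: "A \<in> carrier_mat n m \<Longrightarrow> adj A \<in> carrier_mat m n"
  unfolding adj_def by auto

lemma qf_vec: assumes "X \<in> carrier_mat n n" "v \<in> carrier_vec n"
  shows "(X *\<^sub>v v) \<bullet>c v = qff n (ent X) (\<lambda>i. v $ i)"
proof -
  have "(X *\<^sub>v v) \<bullet>c v = (\<Sum>i<n. (\<Sum>j<n. X $$ (i,j) * v $ j) * cnj (v $ i))"
    using assms by (simp add: scalar_prod_def atLeast0LessThan row_def)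
  also have "\<dots> = qff n (ent X) (\<lambda>i. v $ i)"
    unfolding qff_def ent_def by (simp add: sum_distrib_left sum_distrib_right mult_ac)
  finally show ?thesis .
qed

lemma herm_iff: assumes "X \<in> carrier_mat n n" shows "adj X = X \<longleftrightarrow> hermf n (ent X)"
proof
  assume h: "adj X = X"
  show "hermf n (ent X)" unfolding hermf_def ent_def
  proof (intro allI impI)
    fix i j assume ij: "i < n" "j < n"
    have "X $$ (i,j) = adj X $$ (i,j)" using h by simp
    also have "\<dots> = cnj (X $$ (j,i))" using assms ij by simp
    finally show "X $$ (i,j) = cnj (X $$ (j,i))" .
  qed
next
  assume h: "hermf n (ent X)"
  show "adj X = X"
  proof (rule eq_matI)
    fix i j assume ij: "i < dim_row X" "j < dim_col X"
    then show "adj X $$ (i,j) = X $$ (i,j)" using assms h unfolding hermf_def ent_def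
      by (metis adj_index carrier_matD(1) carrier_matD(2))
  qed (use assms in auto)
qed

lemma cpos_iff: "(0::complex) \<le> z \<longleftrightarrow> Im z = 0 \<and> 0 \<le> Re z"
  by (auto simp: less_eq_complex_def)

lemma psd_iff: "psd n X \<longleftrightarrow> X \<in> carrier_mat n n \<and> hermf n (ent X) \<and> (\<forall>v. 0 \<le> qff n (ent X) v)"
proof
  assume p: "psd n X"
  then have c: "X \<in> carrier_mat n n" and h: "adj X = X" by (auto simp: psd_def)
  have "0 \<le> qff n (ent X) v" for v
  proof -
    have "0 \<le> (X *\<^sub>v vec n v) \<bullet>c vec n v" using p by (simp add: psd_def cpos_iff)
    also have "\<dots> = qff n (ent X) (\<lambda>i. vec n v $ i)" using c by (simp add: qf_vec)
    also have "\<dots> = qff n (ent X) v" by (rule qff_cong_v) simp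
    finally show ?thesis .
  qed
  then show "X \<in> carrier_mat n n \<and> hermf n (ent X) \<and> (\<forall>v. 0 \<le> qff n (ent X) v)"
    using c h herm_iff by blast
next
  assume a: "X \<in> carrier_mat n n \<and> hermf n (ent X) \<and> (\<forall>v. 0 \<le> qff n (ent X) v)"
  have "adj X = X" using a herm_iff by blast
  moreover have "Im ((X *\<^sub>v v) \<bullet>c v) = 0 \<and> 0 \<le> Re ((X *\<^sub>v v) \<bullet>c v)" if "v \<in> carrier_vec n" for v
  proof -
    have "0 \<le> (X *\<^sub>v v) \<bullet>c v" using a that qf_vec[of X n v] by simp
    then show ?thesis by (simp add: cpos_iff)
  qed
  ultimately show "psd n X" unfolding psd_def using a by blast
qed

lemma divmod_aux[simp]: "x < d \<Longrightarrow> (a * d + x) div (d::nat) = a" "x < d \<Longrightarrow> (a * d + x) mod (d::nat) = x"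
  by simp_all

lemma sum_split: fixes f :: "nat \<Rightarrow> 'a::comm_monoid_add" shows "(\<Sum>i<m*n. f i) = (\<Sum>a<m. \<Sum>x<n. f (a*n + x))"
proof -
  have "(\<Sum>x<n. f (a*n + x)) = sum f {a*n..<a*n+n}" for a
  proof -
    show ?thesis
      using sum.shift_bounds_nat_ivl[of f 0 "a*n" n] by (simp add: add.commute atLeast0LessThan)
  qed
  then show ?thesis by (simp add: sum.nat_group)
qed

lemma sum_collapse1: fixes g :: "nat \<Rightarrow> 'a::comm_monoid_add" assumes "a < r"
  shows "(\<Sum>k<r*d. if k div d = a then g k else 0) = (\<Sum>x<d. g (a*d + x))"
proof -
  have "(\<Sum>k<r*d. if k div d = a then g k else 0)
      = (\<Sum>a'<r. \<Sum>x<d. if (a'*d+x) div d = a then g (a'*d+x) else 0)"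
    by (rule sum_split[where f = "\<lambda>k::nat. if k div d = a then g k else 0"])
  also have "\<dots> = (\<Sum>a'<r. if a' = a then (\<Sum>x<d. g (a'*d+x)) else 0)"
  proof (rule sum.cong[OF refl])
    fix a' assume "a' \<in> {..<r}"
    show "(\<Sum>x<d. if (a'*d+x) div d = a then g (a'*d+x) else 0) = (if a' = a then (\<Sum>x<d. g (a'*d+x)) else 0)"
      by (cases "a' = a") (auto intro!: sum.cong sum.neutral)
  qed
  also have "\<dots> = (\<Sum>x<d. g (a*d + x))" using assms by simp
  finally show ?thesis .
qed

lemma sum_collapse2: fixes g :: "nat \<Rightarrow> 'a::comm_monoid_add" assumes "a < r" "e < dA"
  shows "(\<Sum>k<r*(dA*dB). if k div (dA*dB) = a \<and> (k mod (dA*dB)) div dB = e then g k else 0)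
     = (\<Sum>s<dB. g (a*(dA*dB) + e*dB + s))"
proof -
  have "(\<Sum>k<r*(dA*dB). if k div (dA*dB) = a \<and> (k mod (dA*dB)) div dB = e then g k else 0)
     = (\<Sum>k<r*(dA*dB). if k div (dA*dB) = a then (if (k mod (dA*dB)) div dB = e then g k else 0) else 0)"
    by (intro sum.cong refl) auto
  also have "\<dots> = (\<Sum>x<dA*dB. if ((a*(dA*dB)+x) mod (dA*dB)) div dB = e then g (a*(dA*dB)+x) else 0)"
    using assms(1) by (rule sum_collapse1[where g = "\<lambda>k. if (k mod (dA*dB)) div dB = e then g k else 0"])
  also have "\<dots> = (\<Sum>x<dA*dB. if x div dB = e then g (a*(dA*dB)+x) else 0)"
  proof (rule sum.cong[OF refl])
    fix x assume "x \<in> {..<dA*dB}"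
    then have "(a*(dA*dB)+x) mod (dA*dB) = x" using divmod_aux(2)[of x "dA*dB" a] by simp
    then show "(if ((a*(dA*dB)+x) mod (dA*dB)) div dB = e then g (a*(dA*dB)+x) else 0) = (if x div dB = e then g (a*(dA*dB)+x) else 0)"
      by simp
  qed
  also have "\<dots> = (\<Sum>s<dB. g (a*(dA*dB) + (e*dB+s)))"
    using assms(2) by (rule sum_collapse1[where g = "\<lambda>x::nat. g (a*(dA*dB)+x)"])
  finally show ?thesis by (simp add: add.assoc)
qed

lemma qff_sum: "qff n (\<lambda>i j. \<Sum>m\<in>S. F m i j) v = (\<Sum>m\<in>S. qff n (F m) v)"
proof -
  have "qff n (\<lambda>i j. \<Sum>m\<in>S. F m i j) v = (\<Sum>i<n. \<Sum>j<n. \<Sum>m\<in>S. cnj (v i) * F m i j * v j)"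
    unfolding qff_def by (simp add: sum_distrib_left sum_distrib_right)
  also have "\<dots> = (\<Sum>i<n. \<Sum>m\<in>S. \<Sum>j<n. cnj (v i) * F m i j * v j)"
    by (rule sum.cong[OF refl], rule sum.swap)
  also have "\<dots> = (\<Sum>m\<in>S. \<Sum>i<n. \<Sum>j<n. cnj (v i) * F m i j * v j)"
    by (rule sum.swap)
  finally show ?thesis unfolding qff_def .
qed

lemma qff_scale: "qff n (\<lambda>i j. c * F i j) v = c * qff n F v"
  unfolding qff_def by (simp add: sum_distrib_left mult_ac)

lemma qff_diff: "qff n (\<lambda>i j. F i j - G i j) v = qff n F v - qff n G v"
  unfolding qff_def by (simp add: algebra_simps sum_subtractf)

lemma qff_sandwich:
  "qff n (\<lambda>i j. \<Sum>k<N. \<Sum>l<N. A i k * G k l * cnj (A j l)) v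
   = qff N G (\<lambda>k. \<Sum>i<n. cnj (A i k) * v i)"
proof -
  define T where "T i j k l = cnj (v i) * A i k * G k l * cnj (A j l) * v j" for i j k l
  have "qff n (\<lambda>i j. \<Sum>k<N. \<Sum>l<N. A i k * G k l * cnj (A j l)) v
      = (\<Sum>i<n. \<Sum>j<n. \<Sum>k<N. \<Sum>l<N. T i j k l)"
    unfolding qff_def T_def by (simp add: sum_distrib_left sum_distrib_right mult_ac)
  also have "\<dots> = (\<Sum>i<n. \<Sum>k<N. \<Sum>j<n. \<Sum>l<N. T i j k l)"
    by (rule sum.cong[OF refl], rule sum.swap)
  also have "\<dots> = (\<Sum>k<N. \<Sum>i<n. \<Sum>j<n. \<Sum>l<N. T i j k l)"
    by (rule sum.swap)
  also have "\<dots> = (\<Sum>k<N. \<Sum>i<n. \<Sum>l<N. \<Sum>j<n. T i j k l)"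
    by (rule sum.cong[OF refl], rule sum.cong[OF refl], rule sum.swap)
  also have "\<dots> = (\<Sum>k<N. \<Sum>l<N. \<Sum>i<n. \<Sum>j<n. T i j k l)"
    by (rule sum.cong[OF refl], rule sum.swap)
  also have "\<dots> = qff N G (\<lambda>k. \<Sum>i<n. cnj (A i k) * v i)"
    unfolding qff_def T_def by (simp add: cnj_sum sum_distrib_left sum_distrib_right mult_ac)
  finally show ?thesis .
qed

lemma hermf_sandwich: assumes "hermf N G"
  shows "hermf n (\<lambda>i j. \<Sum>k<N. \<Sum>l<N. A i k * G k l * cnj (A j l))"
  unfolding hermf_def
proof (intro allI impI)
  fix i j assume "i < n" "j < n"
  have g: "cnj (G k l) = G l k" if "k < N" "l < N" for k l
    using assms that unfolding hermf_def by (metis complex_cnj_cnj)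
  have "cnj (\<Sum>k<N. \<Sum>l<N. A j k * G k l * cnj (A i l)) = (\<Sum>k<N. \<Sum>l<N. cnj (A j k) * cnj (G k l) * A i l)"
    by (simp add: cnj_sum)
  also have "\<dots> = (\<Sum>k<N. \<Sum>l<N. cnj (A j k) * G l k * A i l)"
    using g by (intro sum.cong refl) simp
  also have "\<dots> = (\<Sum>l<N. \<Sum>k<N. cnj (A j k) * G l k * A i l)" by (rule sum.swap)
  also have "\<dots> = (\<Sum>k<N. \<Sum>l<N. A i k * G k l * cnj (A j l))"
    by (simp add: mult_ac)
  finally show "(\<Sum>k<N. \<Sum>l<N. A i k * G k l * cnj (A j l)) = cnj (\<Sum>k<N. \<Sum>l<N. A j k * G k l * cnj (A i l))"
    by simp
qed

lemma hermfD: "hermf n F \<Longrightarrow> i < n \<Longrightarrow> j < n \<Longrightarrow> F i j = cnj (F j i)"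
  unfolding hermf_def by blast

lemma hermf_sum: assumes "\<And>m. m \<in> S \<Longrightarrow> hermf n (F m)" shows "hermf n (\<lambda>i j. \<Sum>m\<in>S. F m i j)"
  unfolding hermf_def
proof (intro allI impI)
  fix i j assume ij: "i < n" "j < n"
  have "(\<Sum>m\<in>S. F m i j) = (\<Sum>m\<in>S. cnj (F m j i))"
    by (rule sum.cong[OF refl]) (rule hermfD[OF assms ij])
  then show "(\<Sum>m\<in>S. F m i j) = cnj (\<Sum>m\<in>S. F m j i)" by (simp only: cnj_sum)
qed

lemma hermf_scale: assumes "hermf n F" shows "hermf n (\<lambda>i j. complex_of_real c * F i j)"
  unfolding hermf_def
proof (intro allI impI)
  fix i j assume ij: "i < n" "j < n"
  show "complex_of_real c * F i j = cnj (complex_of_real c * F j i)"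
    using hermfD[OF assms ij] by simp
qed

lemma hermf_diff: assumes "hermf n F" "hermf n G" shows "hermf n (\<lambda>i j. F i j - G i j)"
  unfolding hermf_def
proof (intro allI impI)
  fix i j assume ij: "i < n" "j < n"
  show "F i j - G i j = cnj (F j i - G j i)"
    using hermfD[OF assms(1) ij] hermfD[OF assms(2) ij] by simp
qed

lemma hermf_cong: assumes "hermf n F" "\<And>i j. i < n \<Longrightarrow> j < n \<Longrightarrow> F i j = G i j" shows "hermf n G"
  unfolding hermf_def
proof (intro allI impI)
  fix i j assume ij: "i < n" "j < n"
  show "G i j = cnj (G j i)"
    using hermfD[OF assms(1) ij] assms(2)[OF ij] assms(2)[OF ij(2,1)] by simp
qed

lemma cnj_if: "cnj (if b then x else y) = (if b then cnj x else cnj y)" by simp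

lemma trace_bound:
  fixes u :: "nat \<Rightarrow> nat \<Rightarrow> complex" and c :: real
  assumes pos: "\<And>f. 0 \<le> qff m J f"
    and orth: "\<And>j l. j < k \<Longrightarrow> l < k \<Longrightarrow> (\<Sum>x<m. cnj (u j x) * u l x) = (if j = l then complex_of_real c else 0)"
    and c: "c > 0"
  shows "(\<Sum>j<k. qff m J (u j)) \<le> complex_of_real c * (\<Sum>x<m. J x x)"
proof -
  define cc where "cc = complex_of_real c"
  have c0: "cc \<noteq> 0" using c by (simp add: cc_def)
  have ccnj: "cnj cc = cc" by (simp add: cc_def)
  define P where "P y z = (\<Sum>j<k. cnj (u j y) * u j z) / cc" for y z
  define f where "f x y = (if x = y then 1 else 0) - cnj (P y x)" for x y
  have Pc: "cnj (P z y) = P y z" for y z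
    unfolding P_def by (simp add: cnj_sum ccnj mult_ac)
  have orth': "(\<Sum>x<m. u j x * cnj (u l x)) = (if j = l then cc else 0)" if "j < k" "l < k" for j l
  proof -
    have "(\<Sum>x<m. u j x * cnj (u l x)) = cnj (\<Sum>x<m. cnj (u j x) * u l x)" by (simp add: cnj_sum)
    also have "\<dots> = (if j = l then cc else 0)" using orth[OF that] ccnj by (simp add: cc_def)
    finally show ?thesis .
  qed
  have S1: "(\<Sum>x<m. P y x * cnj (P z x)) = P y z" for y z
  proof -
    have "(\<Sum>x<m. P y x * cnj (P z x))
        = (\<Sum>x<m. (\<Sum>j<k. cnj (u j y) * u j x) * (\<Sum>l<k. u l z * cnj (u l x))) / (cc * cc)"
    proof -
      have "P y x * cnj (P z x) = (\<Sum>j<k. cnj (u j y) * u j x) * (\<Sum>l<k. u l z * cnj (u l x)) / (cc * cc)" for x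
        unfolding P_def by (simp add: cnj_sum ccnj)
      then show ?thesis by (simp add: sum_divide_distrib)
    qed
    also have "\<dots> = (\<Sum>x<m. \<Sum>j<k. \<Sum>l<k. cnj (u j y) * u l z * (u j x * cnj (u l x))) / (cc * cc)"
      by (simp only: sum_product) (simp add: mult_ac)
    also have "\<dots> = (\<Sum>j<k. \<Sum>x<m. \<Sum>l<k. cnj (u j y) * u l z * (u j x * cnj (u l x))) / (cc * cc)"
      by (subst sum.swap) (rule refl)
    also have "\<dots> = (\<Sum>j<k. \<Sum>l<k. \<Sum>x<m. cnj (u j y) * u l z * (u j x * cnj (u l x))) / (cc * cc)"
      by (subst (2) sum.swap) (rule refl)
    also have "\<dots> = (\<Sum>j<k. \<Sum>l<k. cnj (u j y) * u l z * (\<Sum>x<m. u j x * cnj (u l x))) / (cc * cc)"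
      by (simp add: sum_distrib_left)
    also have "\<dots> = (\<Sum>j<k. \<Sum>l<k. if j = l then cnj (u j y) * u l z * cc else 0) / (cc * cc)"
      by (intro arg_cong[where f="\<lambda>t. t / (cc*cc)"] sum.cong refl) (simp add: orth')
    also have "\<dots> = (\<Sum>j<k. cnj (u j y) * u j z * cc) / (cc * cc)"
      by simp
    also have "\<dots> = P y z" unfolding P_def using c0 by (simp add: sum_distrib_right[symmetric])
    finally show ?thesis .
  qed
  have K: "(\<Sum>x<m. cnj (f x y) * f x z) = (if y = z then 1 else 0) - P y z" if "y < m" "z < m" for y z
  proof -
    have "(\<Sum>x<m. cnj (f x y) * f x z)
       = (\<Sum>x<m. ((if x = y then 1 else 0) - P y x) * ((if x = z then 1 else 0) - cnj (P z x)))"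
    proof (rule sum.cong[OF refl])
      fix x
      have "cnj (f x y) = (if x = y then 1 else 0) - P y x"
        unfolding f_def by (cases "x = y") (simp_all add: Pc)
      then show "cnj (f x y) * f x z = ((if x = y then 1 else 0) - P y x) * ((if x = z then 1 else 0) - cnj (P z x))"
        unfolding f_def by simp
    qed
    also have "\<dots> = (\<Sum>x<m. (if x = y then 1 else 0) * (if x = z then 1 else 0)
        - (if x = y then 1 else 0) * cnj (P z x) - P y x * (if x = z then 1 else 0)
        + P y x * cnj (P z x))"
      by (rule sum.cong[OF refl]) (simp add: algebra_simps)
    also have "\<dots> = (\<Sum>x<m. (if x = y then 1 else 0) * (if x = z then 1 else 0))
        - (\<Sum>x<m. (if x = y then 1 else 0) * cnj (P z x)) - (\<Sum>x<m. P y x * (if x = z then 1 else 0))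
        + (\<Sum>x<m. P y x * cnj (P z x))"
      by (simp only: sum.distrib sum_subtractf)
    also have "(\<Sum>x<m. (if x = y then 1 else 0) * (if x = z then 1 else (0::complex)))
        = (\<Sum>x<m. if x = y then (if y = z then 1 else 0) else 0)"
      by (rule sum.cong) auto
    also have "\<dots> = (if y = z then 1 else 0)" using that by (simp add: sum.delta)
    also have "(\<Sum>x<m. (if x = y then 1 else 0) * cnj (P z x)) = (\<Sum>x<m. if x = y then cnj (P z x) else 0)"
      by (rule sum.cong) auto
    also have "\<dots> = cnj (P z y)" using that by (simp add: sum.delta)
    also have "(\<Sum>x<m. P y x * (if x = z then 1 else 0)) = (\<Sum>x<m. if x = z then P y x else 0)"
      by (rule sum.cong) auto
    also have "\<dots> = P y z" using that by (simp add: sum.delta)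
    also have "(\<Sum>x<m. P y x * cnj (P z x)) = P y z" by (rule S1)
    finally show ?thesis by (simp add: Pc)
  qed
  define S where "S = (\<Sum>j<k. qff m J (u j))"
  have "0 \<le> (\<Sum>x<m. qff m J (f x))" by (intro sum_nonneg pos)
  also have "(\<Sum>x<m. qff m J (f x)) = (\<Sum>x<m. \<Sum>y<m. \<Sum>z<m. J y z * (cnj (f x y) * f x z))"
    unfolding qff_def by (simp add: mult_ac)
  also have "\<dots> = (\<Sum>y<m. \<Sum>x<m. \<Sum>z<m. J y z * (cnj (f x y) * f x z))"
    by (rule sum.swap)
  also have "\<dots> = (\<Sum>y<m. \<Sum>z<m. \<Sum>x<m. J y z * (cnj (f x y) * f x z))"
    by (rule sum.cong[OF refl], rule sum.swap)
  also have "\<dots> = (\<Sum>y<m. \<Sum>z<m. J y z * ((if y = z then 1 else 0) - P y z))"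
    by (intro sum.cong refl) (simp add: K sum_distrib_left[symmetric])
  also have "\<dots> = (\<Sum>y<m. \<Sum>z<m. J y z * (if y = z then 1 else 0)) - (\<Sum>y<m. \<Sum>z<m. J y z * P y z)"
    by (simp add: algebra_simps sum_subtractf)
  also have "(\<Sum>y<m. \<Sum>z<m. J y z * (if y = z then 1 else 0)) = (\<Sum>y<m. J y y)"
  proof (rule sum.cong[OF refl])
    fix y assume "y \<in> {..<m}"
    have "(\<Sum>z<m. J y z * (if y = z then 1 else 0)) = (\<Sum>z<m. if y = z then J y z else 0)"
      by (rule sum.cong) auto
    also have "\<dots> = J y y" using \<open>y \<in> {..<m}\<close> by (simp add: sum.delta)
    finally show "(\<Sum>z<m. J y z * (if y = z then 1 else 0)) = J y y" .
  qed
  also have "(\<Sum>y<m. \<Sum>z<m. J y z * P y z) = (\<Sum>y<m. \<Sum>z<m. \<Sum>j<k. cnj (u j y) * J y z * u j z) / cc"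
    unfolding P_def by (simp add: sum_divide_distrib sum_distrib_left mult_ac)
  also have "(\<Sum>y<m. \<Sum>z<m. \<Sum>j<k. cnj (u j y) * J y z * u j z) = S"
  proof -
    have "(\<Sum>y<m. \<Sum>z<m. \<Sum>j<k. cnj (u j y) * J y z * u j z) = (\<Sum>y<m. \<Sum>j<k. \<Sum>z<m. cnj (u j y) * J y z * u j z)"
      by (rule sum.cong[OF refl], rule sum.swap)
    also have "\<dots> = (\<Sum>j<k. \<Sum>y<m. \<Sum>z<m. cnj (u j y) * J y z * u j z)"
      by (rule sum.swap)
    finally show ?thesis unfolding S_def qff_def .
  qed
  finally have "S / cc \<le> (\<Sum>y<m. J y y)" by simp
  then have "cc * (S / cc) \<le> cc * (\<Sum>y<m. J y y)"
    by (rule mult_left_mono) (use c in \<open>simp add: cc_def less_eq_complex_def\<close>)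
  then show ?thesis using c0 unfolding S_def cc_def by simp
qed

lemma gram:
  fixes \<beta> :: "nat \<Rightarrow> complex" and c :: real
  assumes pos: "\<And>f. 0 \<le> qff n G f"
    and beta: "(\<Sum>k<K. cnj (\<beta> k) * \<beta> k) = complex_of_real c" and c: "c > 0"
  shows "qff n G (\<lambda>i. \<Sum>k<K. \<beta> k * w k i) \<le> complex_of_real c * (\<Sum>k<K. qff n G (w k))"
proof -
  define M where "M k l = (\<Sum>i<n. \<Sum>j<n. cnj (w k i) * G i j * cnj (cnj (w l j)))" for k l
  have MQ: "qff K M g = qff n G (\<lambda>i. \<Sum>k<K. g k * w k i)" for g
  proof -
    have "qff K M g = qff n G (\<lambda>i. \<Sum>k<K. cnj (cnj (w k i)) * g k)"
      unfolding M_def by (rule qff_sandwich)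
    then show ?thesis by (simp add: mult_ac)
  qed
  have posM: "0 \<le> qff K M g" for g unfolding MQ by (rule pos)
  have "(\<Sum>j<(1::nat). qff K M \<beta>) \<le> complex_of_real c * (\<Sum>x<K. M x x)"
    using trace_bound[where u="\<lambda>_. \<beta>" and k=1 and m=K and J=M and c=c, OF posM _ c] beta by simp
  moreover have "M x x = qff n G (w x)" for x unfolding M_def qff_def by simp
  ultimately show ?thesis by (simp add: MQ)
qed

lemma kron_index: assumes "A \<in> carrier_mat ra ca" "B \<in> carrier_mat rb cb" "i < ra*rb" "j < ca*cb"
  shows "kron A B $$ (i,j) = A $$ (i div rb, j div cb) * B $$ (i mod rb, j mod cb)"
  using assms unfolding kron_def by auto

lemma kron_carrier: "kron A B \<in> carrier_mat (dim_row A * dim_row B) (dim_col A * dim_col B)"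
  unfolding kron_def by auto

lemma eunit_index: "i < d \<Longrightarrow> j < d \<Longrightarrow> eunit d a a' $$ (i,j) = (if i = a \<and> j = a' then 1 else 0)"
  unfolding eunit_def by auto

lemma eunit_carrier: "eunit d a a' \<in> carrier_mat d d" unfolding eunit_def by auto

lemma msum_index: "i < n \<Longrightarrow> j < m \<Longrightarrow> msum n m f S $$ (i,j) = (\<Sum>s\<in>S. f s $$ (i,j))"
  unfolding msum_def by auto

lemma msum_carrier: "msum n m f S \<in> carrier_mat n m" unfolding msum_def by auto

lemma block_index: "i < dB \<Longrightarrow> j < dB \<Longrightarrow> block dB X a a' $$ (i,j) = X $$ (a*dB+i, a'*dB+j)"
  unfolding block_def by auto

lemma block_carrier: "block dB X a a' \<in> carrier_mat dB dB" unfolding block_def by auto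

lemma map_tensor_id_index:
  assumes M: "\<And>a a'. a < r \<Longrightarrow> a' < r \<Longrightarrow> M (block d X a a') \<in> carrier_mat d d"
    and ij: "i < r*d" "j < r*d"
  shows "map_tensor (\<lambda>Y. Y) M r d X $$ (i,j) = M (block d X (i div d) (j div d)) $$ (i mod d, j mod d)"
proof -
  have d0: "d > 0" using ij by (cases d) auto
  have ir: "i div d < r" "j div d < r" using ij d0 by (auto simp: div_less_iff_less_mult mult.commute)
  have "map_tensor (\<lambda>Y. Y) M r d X $$ (i,j)
      = (\<Sum>p\<in>{..<r}\<times>{..<r}. (case p of (a,a') \<Rightarrow> kron (eunit r a a') (M (block d X a a'))) $$ (i,j))"
    unfolding map_tensor_def using ij by (simp add: msum_index)
  also have "\<dots> = (\<Sum>p\<in>{..<r}\<times>{..<r}. if p = (i div d, j div d) then M (block d X (fst p) (snd p)) $$ (i mod d, j mod d) else 0)"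
  proof (rule sum.cong[OF refl])
    fix p assume p: "p \<in> {..<r}\<times>{..<r}"
    obtain a a' where pa: "p = (a,a')" by (cases p)
    have "kron (eunit r a a') (M (block d X a a')) $$ (i,j) = eunit r a a' $$ (i div d, j div d) * M (block d X a a') $$ (i mod d, j mod d)"
      using kron_index[OF eunit_carrier M ij] p pa by auto
    also have "\<dots> = (if (a,a') = (i div d, j div d) then M (block d X a a') $$ (i mod d, j mod d) else 0)"
      using ir by (auto simp: eunit_index)
    finally show "(case p of (a,a') \<Rightarrow> kron (eunit r a a') (M (block d X a a'))) $$ (i,j)
       = (if p = (i div d, j div d) then M (block d X (fst p) (snd p)) $$ (i mod d, j mod d) else 0)"
      using pa by auto
  qed
  also have "\<dots> = M (block d X (i div d) (j div d)) $$ (i mod d, j mod d)"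
    using ir by (simp add: sum.delta')
  finally show ?thesis .
qed

lemma mtrace_eunit: "c < d \<Longrightarrow> c' < d \<Longrightarrow> mtrace (eunit d c c') = (if c = c' then 1 else 0)"
  unfolding mtrace_def eunit_def by (cases "c = c'") (auto simp: sum.delta intro!: sum.neutral)

lemma lin_map_carrier: "lin_map d Q \<Longrightarrow> X \<in> carrier_mat d d \<Longrightarrow> Q X \<in> carrier_mat d d"
  unfolding lin_map_def by blast

lemma lin_map_smult: "lin_map d Q \<Longrightarrow> X \<in> carrier_mat d d \<Longrightarrow> Q (c \<cdot>\<^sub>m X) = c \<cdot>\<^sub>m Q X"
  unfolding lin_map_def by blast

lemma map_tensor_repl_index:
  assumes Q: "lin_map dB Q" and xy: "x < dA*dB" "y < dA*dB"
  shows "map_tensor (repl_id dA) Q dA dB X $$ (x,y)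
    = (if x div dB = y div dB then (\<Sum>c<dA. Q (block dB X c c) $$ (x mod dB, y mod dB)) else 0)"
proof -
  have d0: "dB > 0" using xy by (cases dB) auto
  have ir: "x div dB < dA" "y div dB < dA" using xy d0 by (auto simp: div_less_iff_less_mult)
  have QC: "Q (block dB X c c') \<in> carrier_mat dB dB" for c c'
    using lin_map_carrier[OF Q block_carrier] .
  have RC: "repl_id dA E \<in> carrier_mat dA dA" for E unfolding repl_id_def by auto
  have "map_tensor (repl_id dA) Q dA dB X $$ (x,y)
      = (\<Sum>p\<in>{..<dA}\<times>{..<dA}. (case p of (c,c') \<Rightarrow> kron (repl_id dA (eunit dA c c')) (Q (block dB X c c'))) $$ (x,y))"
    unfolding map_tensor_def using xy by (simp add: msum_index)
  also have "\<dots> = (\<Sum>(c,c')\<in>{..<dA}\<times>{..<dA}. kron (repl_id dA (eunit dA c c')) (Q (block dB X c c')) $$ (x,y))"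
    by (rule sum.cong) (auto split: prod.split)
  also have "\<dots> = (\<Sum>c<dA. \<Sum>c'<dA. kron (repl_id dA (eunit dA c c')) (Q (block dB X c c')) $$ (x,y))"
    by (rule sum.cartesian_product[symmetric])
  also have "\<dots> = (\<Sum>c<dA. \<Sum>c'<dA. if c' = c then (if x div dB = y div dB then Q (block dB X c c) $$ (x mod dB, y mod dB) else 0) else 0)"
  proof (intro sum.cong refl)
    fix c c' assume c: "c \<in> {..<dA}" "c' \<in> {..<dA}"
    have "kron (repl_id dA (eunit dA c c')) (Q (block dB X c c')) $$ (x,y)
        = repl_id dA (eunit dA c c') $$ (x div dB, y div dB) * Q (block dB X c c') $$ (x mod dB, y mod dB)"
      using kron_index[OF RC QC xy] .
    also have "\<dots> = (if c' = c then (if x div dB = y div dB then Q (block dB X c c) $$ (x mod dB, y mod dB) else 0) else 0)"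
      using c ir unfolding repl_id_def by (auto simp: mtrace_eunit)
    finally show "kron (repl_id dA (eunit dA c c')) (Q (block dB X c c')) $$ (x,y)
      = (if c' = c then (if x div dB = y div dB then Q (block dB X c c) $$ (x mod dB, y mod dB) else 0) else 0)" .
  qed
  also have "\<dots> = (\<Sum>c<dA. if x div dB = y div dB then Q (block dB X c c) $$ (x mod dB, y mod dB) else 0)"
    by (simp add: sum.delta)
  also have "\<dots> = (if x div dB = y div dB then (\<Sum>c<dA. Q (block dB X c c) $$ (x mod dB, y mod dB)) else 0)"
    by auto
  finally show ?thesis .
qed

lemma mult3_index: assumes "A \<in> carrier_mat m m" "Y \<in> carrier_mat m m" "B \<in> carrier_mat m m" "p < m" "q < m"
  shows "(A * Y * adj B) $$ (p,q) = (\<Sum>s<m. \<Sum>t<m. A $$ (p,s) * Y $$ (s,t) * cnj (B $$ (q,t)))"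
proof -
  have "(A * Y * adj B) $$ (p,q) = (\<Sum>t<m. (A * Y) $$ (p,t) * cnj (B $$ (q,t)))"
    using assms by (simp add: scalar_prod_def atLeast0LessThan row_def col_def)
  also have "\<dots> = (\<Sum>t<m. (\<Sum>s<m. A $$ (p,s) * Y $$ (s,t)) * cnj (B $$ (q,t)))"
    using assms by (intro sum.cong refl) (simp add: scalar_prod_def atLeast0LessThan row_def col_def)
  also have "\<dots> = (\<Sum>t<m. \<Sum>s<m. A $$ (p,s) * Y $$ (s,t) * cnj (B $$ (q,t)))"
    by (simp add: sum_distrib_right)
  also have "\<dots> = (\<Sum>s<m. \<Sum>t<m. A $$ (p,s) * Y $$ (s,t) * cnj (B $$ (q,t)))"
    by (rule sum.swap)
  finally show ?thesis .
qed

lemma outer_index: "i < dim_vec v \<Longrightarrow> j < dim_vec w \<Longrightarrow> outer v w $$ (i,j) = v $ i * cnj (w $ j)"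
  unfolding outer_def by auto

lemma ctrl_unitary_carrier: "ctrl_unitary dA dB b U \<in> carrier_mat (dA*dB) (dA*dB)"
  unfolding ctrl_unitary_def by (rule msum_carrier)

lemma ctrl_unitary_index:
  assumes b: "\<And>j. j < dA \<Longrightarrow> b j \<in> carrier_vec dA" and U: "\<And>j. j < dA \<Longrightarrow> U j \<in> carrier_mat dB dB"
    and xy: "x < dA*dB" "y < dA*dB"
  shows "ctrl_unitary dA dB b U $$ (x,y) = (\<Sum>j<dA. b j $ (x div dB) * cnj (b j $ (y div dB)) * U j $$ (x mod dB, y mod dB))"
proof -
  have d0: "dB > 0" using xy by (cases dB) auto
  have ir: "x div dB < dA" "y div dB < dA" using xy d0 by (auto simp: div_less_iff_less_mult)
  show ?thesis unfolding ctrl_unitary_def using xy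
  proof (simp add: msum_index, intro sum.cong refl)
    fix j assume j: "j \<in> {..<dA}"
    have oc: "outer (b j) (b j) \<in> carrier_mat dA dA" using b[of j] j unfolding outer_def by auto
    show "kron (outer (b j) (b j)) (U j) $$ (x,y) = b j $ (x div dB) * cnj (b j $ (y div dB)) * U j $$ (x mod dB, y mod dB)"
      using kron_index[OF oc U xy] j ir b[of j] by (simp add: outer_index)
  qed
qed

lemma sum_if_const: "(\<Sum>k\<in>S. if P then f k else 0) = (if P then (\<Sum>k\<in>S. f k) else 0)"
  by auto

lemma collapse_double1:
  fixes h :: "nat \<Rightarrow> nat \<Rightarrow> complex"
  assumes "a < r" "a' < r"
  shows "(\<Sum>k<r*d. \<Sum>l<r*d. if k div d = a then (if l div d = a' then h k l else 0) else 0)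
       = (\<Sum>s<d. \<Sum>t<d. h (a*d+s) (a'*d+t))"
proof -
  have "(\<Sum>k<r*d. \<Sum>l<r*d. if k div d = a then (if l div d = a' then h k l else 0) else 0)
      = (\<Sum>k<r*d. if k div d = a then (\<Sum>l<r*d. if l div d = a' then h k l else 0) else 0)"
    by (simp only: sum_if_const)
  also have "\<dots> = (\<Sum>s<d. \<Sum>l<r*d. if l div d = a' then h (a*d+s) l else 0)"
    using assms(1) by (rule sum_collapse1[where g = "\<lambda>k::nat. \<Sum>l<r*d. if l div d = a' then h k l else 0"])
  also have "\<dots> = (\<Sum>s<d. \<Sum>t<d. h (a*d+s) (a'*d+t))"
  proof (rule sum.cong[OF refl])
    fix s show "(\<Sum>l<r*d. if l div d = a' then h (a*d+s) l else 0) = (\<Sum>t<d. h (a*d+s) (a'*d+t))"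
      by (rule sum_collapse1[where g="\<lambda>l. h (a*d+s) l", OF assms(2)])
  qed
  finally show ?thesis .
qed

lemma sandwich_collapse1:
  fixes F G :: "nat \<Rightarrow> complex"
  assumes "a < r" "a' < r"
  shows "(\<Sum>k<r*d. \<Sum>l<r*d. (if k div d = a then F (k mod d) else 0) * X k l * cnj (if l div d = a' then G (l mod d) else 0))
       = (\<Sum>s<d. \<Sum>t<d. F s * X (a*d+s) (a'*d+t) * cnj (G t))"
proof -
  have "(\<Sum>k<r*d. \<Sum>l<r*d. (if k div d = a then F (k mod d) else 0) * X k l * cnj (if l div d = a' then G (l mod d) else 0))
      = (\<Sum>k<r*d. \<Sum>l<r*d. if k div d = a then (if l div d = a' then F (k mod d) * X k l * cnj (G (l mod d)) else 0) else 0)"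
    by (intro sum.cong refl) auto
  also have "\<dots> = (\<Sum>s<d. \<Sum>t<d. F ((a*d+s) mod d) * X (a*d+s) (a'*d+t) * cnj (G ((a'*d+t) mod d)))"
    using assms by (rule collapse_double1)
  also have "\<dots> = (\<Sum>s<d. \<Sum>t<d. F s * X (a*d+s) (a'*d+t) * cnj (G t))"
    by (intro sum.cong refl) simp
  finally show ?thesis .
qed

definition Qmix :: "nat \<Rightarrow> nat \<Rightarrow> (nat \<Rightarrow> complex mat) \<Rightarrow> complex mat \<Rightarrow> complex mat" where
  "Qmix dA dB U Y = mat dB dB (\<lambda>(p,q). (\<Sum>j<dA. \<Sum>s<dB. \<Sum>t<dB. U j $$ (p,s) * Y $$ (s,t) * cnj (U j $$ (q,t))) / of_nat dA)"

lemma Qmix_carrier: "Qmix dA dB U Y \<in> carrier_mat dB dB" unfolding Qmix_def by auto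

lemma Qmix_index: "p < dB \<Longrightarrow> q < dB \<Longrightarrow> Qmix dA dB U Y $$ (p,q) = (\<Sum>j<dA. \<Sum>s<dB. \<Sum>t<dB. U j $$ (p,s) * Y $$ (s,t) * cnj (U j $$ (q,t))) / of_nat dA"
  unfolding Qmix_def by auto

lemma unitary_cols: assumes "unitary d U" "s < d" "t < d"
  shows "(\<Sum>p<d. cnj (U $$ (p,s)) * U $$ (p,t)) = (if s = t then 1 else 0)"
proof -
  have C: "U \<in> carrier_mat d d" and E: "adj U * U = 1\<^sub>m d" using assms unfolding unitary_def by auto
  have "(adj U * U) $$ (s,t) = (\<Sum>p<d. cnj (U $$ (p,s)) * U $$ (p,t))"
    using C assms by (simp add: scalar_prod_def atLeast0LessThan row_def col_def)
  then show ?thesis using E assms by simp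
qed

lemma unitary_rows: assumes "unitary d U" "s < d" "t < d"
  shows "(\<Sum>p<d. U $$ (s,p) * cnj (U $$ (t,p))) = (if s = t then 1 else 0)"
proof -
  have C: "U \<in> carrier_mat d d" and E: "U * adj U = 1\<^sub>m d" using assms unfolding unitary_def by auto
  have "(U * adj U) $$ (s,t) = (\<Sum>p<d. U $$ (s,p) * cnj (U $$ (t,p)))"
    using C assms by (simp add: scalar_prod_def atLeast0LessThan row_def col_def)
  then show ?thesis using E assms by simp
qed

lemma Qmix_trace:
  assumes dA: "dA \<ge> 1" and U: "\<And>j. j < dA \<Longrightarrow> unitary dB (U j)" and X: "X \<in> carrier_mat dB dB"
  shows "mtrace (Qmix dA dB U X) = mtrace X"
proof -
  have "mtrace (Qmix dA dB U X) = (\<Sum>p<dB. (\<Sum>j<dA. \<Sum>s<dB. \<Sum>t<dB. U j $$ (p,s) * X $$ (s,t) * cnj (U j $$ (p,t))) / of_nat dA)"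
    unfolding mtrace_def using Qmix_carrier[of dA dB U X] by (simp add: Qmix_index)
  also have "\<dots> = (\<Sum>j<dA. \<Sum>s<dB. \<Sum>t<dB. \<Sum>p<dB. U j $$ (p,s) * X $$ (s,t) * cnj (U j $$ (p,t))) / of_nat dA"
  proof -
    have "(\<Sum>p<dB. \<Sum>j<dA. \<Sum>s<dB. \<Sum>t<dB. U j $$ (p,s) * X $$ (s,t) * cnj (U j $$ (p,t)))
        = (\<Sum>j<dA. \<Sum>s<dB. \<Sum>t<dB. \<Sum>p<dB. U j $$ (p,s) * X $$ (s,t) * cnj (U j $$ (p,t)))"
    proof -
      have "(\<Sum>p<dB. \<Sum>j<dA. \<Sum>s<dB. \<Sum>t<dB. U j $$ (p,s) * X $$ (s,t) * cnj (U j $$ (p,t)))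
          = (\<Sum>j<dA. \<Sum>p<dB. \<Sum>s<dB. \<Sum>t<dB. U j $$ (p,s) * X $$ (s,t) * cnj (U j $$ (p,t)))"
        by (rule sum.swap)
      also have "\<dots> = (\<Sum>j<dA. \<Sum>s<dB. \<Sum>p<dB. \<Sum>t<dB. U j $$ (p,s) * X $$ (s,t) * cnj (U j $$ (p,t)))"
        by (rule sum.cong[OF refl], rule sum.swap)
      also have "\<dots> = (\<Sum>j<dA. \<Sum>s<dB. \<Sum>t<dB. \<Sum>p<dB. U j $$ (p,s) * X $$ (s,t) * cnj (U j $$ (p,t)))"
        by (rule sum.cong[OF refl], rule sum.cong[OF refl], rule sum.swap)
      finally show ?thesis .
    qed
    then show ?thesis by (simp add: sum_divide_distrib[symmetric])
  qed
  also have "\<dots> = (\<Sum>j<dA. \<Sum>s<dB. \<Sum>t<dB. X $$ (s,t) * (if t = s then 1 else 0)) / of_nat dA"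
  proof -
    have "(\<Sum>p<dB. U j $$ (p,s) * X $$ (s,t) * cnj (U j $$ (p,t))) = X $$ (s,t) * (if t = s then 1 else 0)"
      if "j < dA" "s < dB" "t < dB" for j s t
    proof -
      have "(\<Sum>p<dB. U j $$ (p,s) * X $$ (s,t) * cnj (U j $$ (p,t))) = X $$ (s,t) * (\<Sum>p<dB. cnj (U j $$ (p,t)) * U j $$ (p,s))"
        by (simp add: sum_distrib_left mult_ac)
      then show ?thesis using unitary_cols[OF U[OF that(1)] that(3,2)] by simp
    qed
    then show ?thesis by (intro arg_cong[where f="\<lambda>z. z / of_nat dA"] sum.cong refl) auto
  qed
  also have "\<dots> = (\<Sum>j<dA. mtrace X) / of_nat dA"
  proof -
    have "(\<Sum>t<dB. X $$ (s,t) * (if t = s then 1 else 0)) = X $$ (s,s)" if "s < dB" for s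
    proof -
      have "(\<Sum>t<dB. X $$ (s,t) * (if t = s then 1 else 0)) = (\<Sum>t<dB. if t = s then X $$ (s,t) else 0)"
        by (rule sum.cong) auto
      then show ?thesis using that by (simp add: sum.delta)
    qed
    then show ?thesis unfolding mtrace_def using X by simp
  qed
  also have "\<dots> = mtrace X" using dA by simp
  finally show ?thesis .
qed

lemma Qmix_lin: "lin_map dB (Qmix dA dB U)"
  unfolding lin_map_def
proof (intro conjI ballI allI)
  fix X :: "complex mat" assume "X \<in> carrier_mat dB dB" show "Qmix dA dB U X \<in> carrier_mat dB dB" by (rule Qmix_carrier)
next
  fix X Y :: "complex mat" assume X: "X \<in> carrier_mat dB dB" and Y: "Y \<in> carrier_mat dB dB"
  show "Qmix dA dB U (X + Y) = Qmix dA dB U X + Qmix dA dB U Y"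
  proof (rule eq_matI)
    fix p q assume pq: "p < dim_row (Qmix dA dB U X + Qmix dA dB U Y)" "q < dim_col (Qmix dA dB U X + Qmix dA dB U Y)"
    then have pq': "p < dB" "q < dB" using Qmix_carrier[of dA dB U Y] by auto
    have "(\<Sum>j<dA. \<Sum>s<dB. \<Sum>t<dB. U j $$ (p,s) * (X + Y) $$ (s,t) * cnj (U j $$ (q,t)))
        = (\<Sum>j<dA. \<Sum>s<dB. \<Sum>t<dB. U j $$ (p,s) * X $$ (s,t) * cnj (U j $$ (q,t)))
        + (\<Sum>j<dA. \<Sum>s<dB. \<Sum>t<dB. U j $$ (p,s) * Y $$ (s,t) * cnj (U j $$ (q,t)))"
      using X Y by (simp add: sum.distrib[symmetric] algebra_simps)
    then show "Qmix dA dB U (X + Y) $$ (p,q) = (Qmix dA dB U X + Qmix dA dB U Y) $$ (p,q)"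
      using pq' Qmix_carrier[of dA dB U Y] Qmix_carrier[of dA dB U X]
      by (simp add: Qmix_index add_divide_distrib)
  qed (auto simp: Qmix_def)
next
  fix X :: "complex mat" and c :: complex assume X: "X \<in> carrier_mat dB dB"
  show "Qmix dA dB U (c \<cdot>\<^sub>m X) = c \<cdot>\<^sub>m Qmix dA dB U X"
  proof (rule eq_matI)
    fix p q assume pq: "p < dim_row (c \<cdot>\<^sub>m Qmix dA dB U X)" "q < dim_col (c \<cdot>\<^sub>m Qmix dA dB U X)"
    then have pq': "p < dB" "q < dB" using Qmix_carrier[of dA dB U X] by auto
    have "(\<Sum>j<dA. \<Sum>s<dB. \<Sum>t<dB. U j $$ (p,s) * (c \<cdot>\<^sub>m X) $$ (s,t) * cnj (U j $$ (q,t)))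
        = c * (\<Sum>j<dA. \<Sum>s<dB. \<Sum>t<dB. U j $$ (p,s) * X $$ (s,t) * cnj (U j $$ (q,t)))"
      using X by (simp add: sum_distrib_left mult_ac)
    then show "Qmix dA dB U (c \<cdot>\<^sub>m X) $$ (p,q) = (c \<cdot>\<^sub>m Qmix dA dB U X) $$ (p,q)"
      using pq' Qmix_carrier[of dA dB U X] by (simp add: Qmix_index)
  qed (auto simp: Qmix_def)
qed

lemma div_lt: "i < r*(d::nat) \<Longrightarrow> i div d < r"
  by (cases "d = 0") (auto simp: div_less_iff_less_mult)

lemma Qmix_CP:
  assumes X: "psd (r*dB) X"
  shows "psd (r*dB) (map_tensor (\<lambda>Y. Y) (Qmix dA dB U) r dB X)"
proof -
  define n where "n = r*dB"
  define T where "T = map_tensor (\<lambda>Y. Y) (Qmix dA dB U) r dB X"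
  define A where "A m i k = (if k div dB = i div dB then U m $$ (i mod dB, k mod dB) else 0)" for m i k
  define S where "S m i j = (\<Sum>k<n. \<Sum>l<n. A m i k * ent X k l * cnj (A m j l))" for m i j
  have XC: "X \<in> carrier_mat n n" and Xh: "hermf n (ent X)" and Xp: "\<And>v. 0 \<le> qff n (ent X) v"
    using X unfolding psd_iff n_def by auto
  have TC: "T \<in> carrier_mat n n" unfolding T_def map_tensor_def n_def by (rule msum_carrier)
  have entT: "ent T i j = (\<Sum>m<dA. complex_of_real (1 / real dA) * S m i j)" if ij: "i < n" "j < n" for i j
  proof -
    have ir: "i div dB < r" "j div dB < r" using ij div_lt unfolding n_def by auto
    have md: "i mod dB < dB" "j mod dB < dB" using ij unfolding n_def by (cases "dB = 0"; simp)+
    have "ent T i j = Qmix dA dB U (block dB X (i div dB) (j div dB)) $$ (i mod dB, j mod dB)"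
      unfolding ent_def T_def using ij unfolding n_def by (intro map_tensor_id_index Qmix_carrier)
    also have "\<dots> = (\<Sum>m<dA. \<Sum>s<dB. \<Sum>t<dB. U m $$ (i mod dB, s) * X $$ ((i div dB)*dB+s, (j div dB)*dB+t) * cnj (U m $$ (j mod dB, t))) / of_nat dA"
      using md by (simp add: Qmix_index block_index)
    also have "\<dots> = (\<Sum>m<dA. complex_of_real (1 / real dA) * S m i j)"
    proof -
      have "S m i j = (\<Sum>s<dB. \<Sum>t<dB. U m $$ (i mod dB, s) * X $$ ((i div dB)*dB+s, (j div dB)*dB+t) * cnj (U m $$ (j mod dB, t)))" for m
        unfolding S_def A_def n_def ent_def
        by (rule sandwich_collapse1[where F="\<lambda>s. U m $$ (i mod dB, s)" and G="\<lambda>t. U m $$ (j mod dB, t)" and X="\<lambda>k l. X $$ (k,l)", OF ir])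
      then show ?thesis by (simp add: sum_divide_distrib)
    qed
    finally show ?thesis .
  qed
  have "hermf n (\<lambda>i j. \<Sum>m<dA. complex_of_real (1 / real dA) * S m i j)"
    unfolding S_def by (intro hermf_sum hermf_scale hermf_sandwich Xh)
  then have Th: "hermf n (ent T)" by (rule hermf_cong) (simp add: entT)
  have Tp: "0 \<le> qff n (ent T) v" for v
  proof -
    have "qff n (ent T) v = qff n (\<lambda>i j. \<Sum>m<dA. complex_of_real (1 / real dA) * S m i j) v"
      by (rule qff_cong_F) (simp add: entT)
    also have "\<dots> = (\<Sum>m<dA. complex_of_real (1 / real dA) * qff n (S m) v)"
      by (simp only: qff_sum qff_scale)
    also have "\<dots> = (\<Sum>m<dA. complex_of_real (1 / real dA) * qff n (ent X) (\<lambda>k. \<Sum>i<n. cnj (A m i k) * v i))"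
    proof -
      have "qff n (S m) v = qff n (ent X) (\<lambda>k. \<Sum>i<n. cnj (A m i k) * v i)" for m
        unfolding S_def by (rule qff_sandwich)
      then show ?thesis by simp
    qed
    also have "0 \<le> \<dots>"
      by (intro sum_nonneg mult_nonneg_nonneg Xp) (simp add: less_eq_complex_def)
    finally show ?thesis by simp
  qed
  show ?thesis using TC Th Tp unfolding psd_iff T_def n_def by blast
qed

lemma Qmix_channel:
  assumes dA: "dA \<ge> 1" and U: "\<And>j. j < dA \<Longrightarrow> unitary dB (U j)"
  shows "channel dB (Qmix dA dB U)"
  unfolding channel_def
proof (intro conjI ballI allI impI)
  show "lin_map dB (Qmix dA dB U)" by (rule Qmix_lin)
next
  fix X :: "complex mat" assume "X \<in> carrier_mat dB dB"
  then show "mtrace (Qmix dA dB U X) = mtrace X" using Qmix_trace[where dA=dA and U=U and dB=dB and X=X] dA U by blast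
next
  fix r and X :: "complex mat" assume "psd (r * dB) X"
  then show "psd (r * dB) (map_tensor (\<lambda>Y. Y) (Qmix dA dB U) r dB X)" by (rule Qmix_CP)
qed

lemma sum_swap4: "(\<Sum>a\<in>A. \<Sum>b\<in>B. \<Sum>c\<in>C. \<Sum>d\<in>D. f a b c d) = (\<Sum>c\<in>C. \<Sum>d\<in>D. \<Sum>a\<in>A. \<Sum>b\<in>B. f a b c d)"
proof -
  have "(\<Sum>a\<in>A. \<Sum>b\<in>B. \<Sum>c\<in>C. \<Sum>d\<in>D. f a b c d) = (\<Sum>a\<in>A. \<Sum>c\<in>C. \<Sum>b\<in>B. \<Sum>d\<in>D. f a b c d)"
    by (rule sum.cong[OF refl], rule sum.swap)
  also have "\<dots> = (\<Sum>c\<in>C. \<Sum>a\<in>A. \<Sum>b\<in>B. \<Sum>d\<in>D. f a b c d)" by (rule sum.swap)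
  also have "\<dots> = (\<Sum>c\<in>C. \<Sum>a\<in>A. \<Sum>d\<in>D. \<Sum>b\<in>B. f a b c d)"
    by (rule sum.cong[OF refl], rule sum.cong[OF refl], rule sum.swap)
  also have "\<dots> = (\<Sum>c\<in>C. \<Sum>d\<in>D. \<Sum>a\<in>A. \<Sum>b\<in>B. f a b c d)"
    by (rule sum.cong[OF refl], rule sum.swap)
  finally show ?thesis .
qed

lemma idx_lt: "c < dA \<Longrightarrow> q < dB \<Longrightarrow> c*dB + q < dA*(dB::nat)"
proof -
  assume "c < dA" "q < dB"
  then have "c*dB + q < c*dB + dB" by simp
  also have "\<dots> = (c+1)*dB" by simp
  also have "\<dots> \<le> dA*dB" using \<open>c < dA\<close> by (intro mult_right_mono) auto
  finally show ?thesis .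
qed

locale ctrlsys =
  fixes dA dB :: nat and b :: "nat \<Rightarrow> complex vec" and U :: "nat \<Rightarrow> complex mat"
  assumes onb: "\<forall>i < dA. \<forall>j < dA. b i \<in> carrier_vec dA \<and> b i \<bullet>c b j = (if i = j then 1 else 0)"
    and unit: "\<forall>j < dA. unitary dB (U j)"
begin

lemma bcar: "j < dA \<Longrightarrow> b j \<in> carrier_vec dA" using onb by blast

lemma Ucar: "j < dA \<Longrightarrow> U j \<in> carrier_mat dB dB" using unit unfolding unitary_def by blast

lemma Uun: "j < dA \<Longrightarrow> unitary dB (U j)" using unit by blast

lemma onb_sum: assumes "i < dA" "j < dA"
  shows "(\<Sum>c<dA. b i $ c * cnj (b j $ c)) = (if i = j then 1 else 0)"
proof -
  have "b i \<bullet>c b j = (\<Sum>c<dA. b i $ c * cnj (b j $ c))"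
    using bcar[OF assms(2)] by (simp add: scalar_prod_def atLeast0LessThan)
  then show ?thesis using onb assms by metis
qed

lemma onb_norm: "m < dA \<Longrightarrow> (\<Sum>e<dA. cnj (b m $ e) * b m $ e) = 1"
  using onb_sum[of m m] by (simp add: mult.commute)

lemma complete_sum: assumes "c < dA" "c' < dA"
  shows "(\<Sum>j<dA. b j $ c * cnj (b j $ c')) = (if c = c' then 1 else 0)"
proof -
  define Lm where "Lm = mat dA dA (\<lambda>(j,c). cnj (b j $ c))"
  define Rm where "Rm = mat dA dA (\<lambda>(c,j). b j $ c)"
  have LC: "Lm \<in> carrier_mat dA dA" and RC: "Rm \<in> carrier_mat dA dA" unfolding Lm_def Rm_def by auto
  have "Lm * Rm = 1\<^sub>m dA"
  proof (rule eq_matI)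
    fix j i assume ji: "j < dim_row (1\<^sub>m dA :: complex mat)" "i < dim_col (1\<^sub>m dA :: complex mat)"
    then have ji': "j < dA" "i < dA" by auto
    have "(Lm * Rm) $$ (j,i) = (\<Sum>c<dA. cnj (b j $ c) * b i $ c)"
      using LC RC ji' unfolding Lm_def Rm_def by (simp add: scalar_prod_def atLeast0LessThan row_def col_def)
    also have "\<dots> = (if i = j then 1 else 0)" using onb_sum[OF ji'(2,1)] by (simp add: mult.commute)
    finally show "(Lm * Rm) $$ (j,i) = 1\<^sub>m dA $$ (j,i)" using ji' by auto
  qed (use LC RC in auto)
  then have RL: "Rm * Lm = 1\<^sub>m dA" using mat_mult_left_right_inverse[OF LC RC] by blast
  have "(Rm * Lm) $$ (c,c') = (\<Sum>j<dA. b j $ c * cnj (b j $ c'))"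
    using LC RC assms unfolding Lm_def Rm_def by (simp add: scalar_prod_def atLeast0LessThan row_def col_def)
  then show ?thesis using RL assms by simp
qed

definition Cm where "Cm = ctrl_unitary dA dB b U"

lemma Cm_carrier: "Cm \<in> carrier_mat (dA*dB) (dA*dB)" unfolding Cm_def by (rule ctrl_unitary_carrier)

lemma Cm_index: "x < dA*dB \<Longrightarrow> y < dA*dB \<Longrightarrow> Cm $$ (x,y) = (\<Sum>j<dA. b j $ (x div dB) * cnj (b j $ (y div dB)) * U j $$ (x mod dB, y mod dB))"
  unfolding Cm_def by (rule ctrl_unitary_index) (auto intro: bcar Ucar)

lemma Cm_cols: assumes xy: "x' < dA*dB" "y' < dA*dB"
  shows "(\<Sum>x<dA*dB. Cm $$ (x,x') * cnj (Cm $$ (x,y'))) = (if x' = y' then 1 else 0)"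
proof -
  define e where "e = x' div dB" define s where "s = x' mod dB"
  define e' where "e' = y' div dB" define s' where "s' = y' mod dB"
  have dB0: "dB > 0" using xy by (cases dB) auto
  have es: "e < dA" "s < dB" "e' < dA" "s' < dB" using xy dB0 unfolding e_def s_def e'_def s'_def
    by (auto simp: div_less_iff_less_mult)
  define T where "T c q m m' = (b m $ c * cnj (b m' $ c)) * (cnj (b m $ e) * b m' $ e') * (U m $$ (q,s) * cnj (U m' $$ (q,s')))" for c q m m'
  have "(\<Sum>x<dA*dB. Cm $$ (x,x') * cnj (Cm $$ (x,y'))) = (\<Sum>c<dA. \<Sum>q<dB. Cm $$ (c*dB+q,x') * cnj (Cm $$ (c*dB+q,y')))"
    by (rule sum_split)
  also have "\<dots> = (\<Sum>c<dA. \<Sum>q<dB. \<Sum>m<dA. \<Sum>m'<dA. T c q m m')"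
  proof (intro sum.cong refl)
    fix c q assume cq: "c \<in> {..<dA}" "q \<in> {..<dB}"
    have lt: "c*dB+q < dA*dB" using cq by (intro idx_lt) auto
    have "Cm $$ (c*dB+q,x') * cnj (Cm $$ (c*dB+q,y'))
      = (\<Sum>m<dA. b m $ c * cnj (b m $ e) * U m $$ (q, s)) * (\<Sum>m'<dA. cnj (b m' $ c) * b m' $ e' * cnj (U m' $$ (q, s')))"
      using lt xy cq unfolding e_def s_def e'_def s'_def by (simp add: Cm_index cnj_sum)
    also have "\<dots> = (\<Sum>m<dA. \<Sum>m'<dA. T c q m m')"
      unfolding T_def by (simp only: sum_product) (simp add: mult_ac)
    finally show "Cm $$ (c*dB+q,x') * cnj (Cm $$ (c*dB+q,y')) = (\<Sum>m<dA. \<Sum>m'<dA. T c q m m')" .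
  qed
  also have "\<dots> = (\<Sum>m<dA. \<Sum>m'<dA. \<Sum>c<dA. \<Sum>q<dB. T c q m m')" by (rule sum_swap4)
  also have "\<dots> = (\<Sum>m<dA. \<Sum>m'<dA. (\<Sum>c<dA. b m $ c * cnj (b m' $ c)) * (cnj (b m $ e) * b m' $ e') * (\<Sum>q<dB. U m $$ (q,s) * cnj (U m' $$ (q,s'))))"
    unfolding T_def by (simp add: sum_distrib_left sum_distrib_right mult_ac)
  also have "\<dots> = (\<Sum>m<dA. \<Sum>m'<dA. if m = m' then (cnj (b m $ e) * b m' $ e') * (\<Sum>q<dB. U m $$ (q,s) * cnj (U m' $$ (q,s'))) else 0)"
    by (intro sum.cong refl) (simp add: onb_sum)
  also have "\<dots> = (\<Sum>m<dA. (cnj (b m $ e) * b m $ e') * (\<Sum>q<dB. U m $$ (q,s) * cnj (U m $$ (q,s'))))"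
    by (simp add: sum.delta)
  also have "\<dots> = (\<Sum>m<dA. (b m $ e' * cnj (b m $ e)) * (if s' = s then 1 else 0))"
  proof (rule sum.cong[OF refl])
    fix m assume "m \<in> {..<dA}"
    then have "(\<Sum>q<dB. cnj (U m $$ (q,s')) * U m $$ (q,s)) = (if s' = s then 1 else 0)"
      using es by (intro unitary_cols Uun) auto
    then show "(cnj (b m $ e) * b m $ e') * (\<Sum>q<dB. U m $$ (q,s) * cnj (U m $$ (q,s')))
      = (b m $ e' * cnj (b m $ e)) * (if s' = s then 1 else 0)" by (simp add: mult_ac)
  qed
  also have "\<dots> = (\<Sum>m<dA. b m $ e' * cnj (b m $ e)) * (if s' = s then 1 else 0)"
    by (simp add: sum_distrib_right)
  also have "\<dots> = (if e' = e then 1 else 0) * (if s' = s then 1 else 0)"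
    using es by (simp add: complete_sum)
  also have "\<dots> = (if x' = y' then 1 else 0)"
  proof -
    have "x' = e*dB + s" "y' = e'*dB + s'" unfolding e_def s_def e'_def s'_def by simp_all
    moreover have "(e*dB + s = e'*dB + s') \<longleftrightarrow> (e = e' \<and> s = s')"
      using es by (metis divmod_aux)
    ultimately show ?thesis by auto
  qed
  finally show ?thesis .
qed

end

lemma mod_aux3: "s < dB \<Longrightarrow> (a*(dA*dB) + e*dB + s) mod dB = (s::nat)"
proof -
  assume "s < dB"
  have "a*(dA*dB) + e*dB + s = (a*dA+e)*dB + s" by (simp add: algebra_simps)
  then show ?thesis using \<open>s < dB\<close> by simp
qed

lemma ifprod: "(if P then a else 0) * x * cnj (if Q then c else 0) = (if P then (if Q then a * x * cnj c else 0) else (0::complex))"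
  by auto

lemma sandwich_collapse2:
  fixes F G :: "nat \<Rightarrow> complex" and X :: "nat \<Rightarrow> nat \<Rightarrow> complex"
  assumes "a < r" "a' < r" "e < dA"
  shows "(\<Sum>k<r*(dA*dB). \<Sum>l<r*(dA*dB). (if k div (dA*dB) = a \<and> (k mod (dA*dB)) div dB = e then F (k mod dB) else 0) * X k l
            * cnj (if l div (dA*dB) = a' \<and> (l mod (dA*dB)) div dB = e then G (l mod dB) else 0))
       = (\<Sum>s<dB. \<Sum>t<dB. F s * X (a*(dA*dB)+e*dB+s) (a'*(dA*dB)+e*dB+t) * cnj (G t))"
proof -
  let ?n = "r*(dA*dB)"
  have "(\<Sum>k<?n. \<Sum>l<?n. (if k div (dA*dB) = a \<and> (k mod (dA*dB)) div dB = e then F (k mod dB) else 0) * X k l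
            * cnj (if l div (dA*dB) = a' \<and> (l mod (dA*dB)) div dB = e then G (l mod dB) else 0))
      = (\<Sum>k<?n. if k div (dA*dB) = a \<and> (k mod (dA*dB)) div dB = e then
           (\<Sum>l<?n. if l div (dA*dB) = a' \<and> (l mod (dA*dB)) div dB = e then F (k mod dB) * X k l * cnj (G (l mod dB)) else 0) else 0)"
    by (simp only: ifprod sum_if_const)
  also have "\<dots> = (\<Sum>s<dB. \<Sum>l<?n. if l div (dA*dB) = a' \<and> (l mod (dA*dB)) div dB = e then
       F ((a*(dA*dB)+e*dB+s) mod dB) * X (a*(dA*dB)+e*dB+s) l * cnj (G (l mod dB)) else 0)"
    by (rule sum_collapse2[OF assms(1,3)])
  also have "\<dots> = (\<Sum>s<dB. \<Sum>t<dB. F ((a*(dA*dB)+e*dB+s) mod dB) * X (a*(dA*dB)+e*dB+s) (a'*(dA*dB)+e*dB+t) * cnj (G ((a'*(dA*dB)+e*dB+t) mod dB)))"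
  proof (rule sum.cong[OF refl])
    fix s show "(\<Sum>l<?n. if l div (dA*dB) = a' \<and> (l mod (dA*dB)) div dB = e then
       F ((a*(dA*dB)+e*dB+s) mod dB) * X (a*(dA*dB)+e*dB+s) l * cnj (G (l mod dB)) else 0)
      = (\<Sum>t<dB. F ((a*(dA*dB)+e*dB+s) mod dB) * X (a*(dA*dB)+e*dB+s) (a'*(dA*dB)+e*dB+t) * cnj (G ((a'*(dA*dB)+e*dB+t) mod dB)))"
      by (rule sum_collapse2[OF assms(2,3)])
  qed
  also have "\<dots> = (\<Sum>s<dB. \<Sum>t<dB. F s * X (a*(dA*dB)+e*dB+s) (a'*(dA*dB)+e*dB+t) * cnj (G t))"
    by (intro sum.cong refl) (simp add: mod_aux3)
  finally show ?thesis .
qed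

context ctrlsys begin

definition Atau where
  "Atau i k = (if k div (dA*dB) = i div (dA*dB) then Cm $$ (i mod (dA*dB), k mod (dA*dB)) else 0)"

definition Asig where
  "Asig c e m i k = (if (i mod (dA*dB)) div dB = c then
      (if k div (dA*dB) = i div (dA*dB) \<and> (k mod (dA*dB)) div dB = e then U m $$ (i mod dB, k mod dB) else 0) else 0)"

lemma N_carrier: "X \<in> carrier_mat (dA*dB) (dA*dB) \<Longrightarrow> ctrl_channel dA dB b U X \<in> carrier_mat (dA*dB) (dA*dB)"
  unfolding ctrl_channel_def using ctrl_unitary_carrier adj_carrier by (metis mult_carrier_mat)

lemma tau_entry:
  assumes ij: "i < r*(dA*dB)" "j < r*(dA*dB)"
  shows "map_tensor (\<lambda>Y. Y) (ctrl_channel dA dB b U) r (dA*dB) \<rho> $$ (i,j)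
     = (\<Sum>k<r*(dA*dB). \<Sum>l<r*(dA*dB). Atau i k * \<rho> $$ (k,l) * cnj (Atau j l))"
proof -
  let ?d = "dA*dB"
  have ir: "i div ?d < r" "j div ?d < r" using ij div_lt by auto
  have md: "i mod ?d < ?d" "j mod ?d < ?d" using ij by (cases "?d = 0"; simp)+
  have "map_tensor (\<lambda>Y. Y) (ctrl_channel dA dB b U) r ?d \<rho> $$ (i,j)
      = ctrl_channel dA dB b U (block ?d \<rho> (i div ?d) (j div ?d)) $$ (i mod ?d, j mod ?d)"
    using ij by (intro map_tensor_id_index N_carrier block_carrier)
  also have "\<dots> = (\<Sum>s<?d. \<Sum>t<?d. Cm $$ (i mod ?d, s) * block ?d \<rho> (i div ?d) (j div ?d) $$ (s,t) * cnj (Cm $$ (j mod ?d, t)))"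
    unfolding ctrl_channel_def Cm_def[symmetric] using md by (intro mult3_index Cm_carrier block_carrier)
  also have "\<dots> = (\<Sum>s<?d. \<Sum>t<?d. Cm $$ (i mod ?d, s) * \<rho> $$ ((i div ?d)*?d+s, (j div ?d)*?d+t) * cnj (Cm $$ (j mod ?d, t)))"
    by (intro sum.cong refl) (simp add: block_index)
  also have "\<dots> = (\<Sum>k<r*?d. \<Sum>l<r*?d. Atau i k * \<rho> $$ (k,l) * cnj (Atau j l))"
    unfolding Atau_def
    by (rule sandwich_collapse1[where F="\<lambda>s. Cm $$ (i mod ?d, s)" and G="\<lambda>t. Cm $$ (j mod ?d, t)" and X="\<lambda>k l. \<rho> $$ (k,l)", OF ir, symmetric])
  finally show ?thesis .
qed

lemma RQ_carrier: "map_tensor (repl_id dA) Q dA dB X \<in> carrier_mat (dA*dB) (dA*dB)"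
  unfolding map_tensor_def by (rule msum_carrier)

lemma sig_entry:
  assumes ij: "i < r*(dA*dB)" "j < r*(dA*dB)"
  shows "map_tensor (\<lambda>Y. Y) (map_tensor (repl_id dA) (Qmix dA dB U) dA dB) r (dA*dB) \<rho> $$ (i,j)
     = (\<Sum>c<dA. \<Sum>e<dA. \<Sum>m<dA. complex_of_real (1 / real dA) *
          (\<Sum>k<r*(dA*dB). \<Sum>l<r*(dA*dB). Asig c e m i k * \<rho> $$ (k,l) * cnj (Asig c e m j l)))"
proof -
  let ?d = "dA*dB"
  define a where "a = i div ?d" define a' where "a' = j div ?d"
  define ci where "ci = (i mod ?d) div dB" define cj where "cj = (j mod ?d) div dB"
  define P where "P e m = (\<Sum>s<dB. \<Sum>t<dB. U m $$ (i mod dB, s) * \<rho> $$ (a*?d+e*dB+s, a'*?d+e*dB+t) * cnj (U m $$ (j mod dB, t)))" for e m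
  have ir: "a < r" "a' < r" using ij div_lt unfolding a_def a'_def by auto
  have md: "i mod ?d < ?d" "j mod ?d < ?d" using ij by (cases "?d = 0"; simp)+
  have dB0: "dB > 0" using md by (cases dB) auto
  have cl: "ci < dA" "cj < dA" using md dB0 unfolding ci_def cj_def by (auto simp: div_less_iff_less_mult)
  have mm: "(i mod ?d) mod dB = i mod dB" "(j mod ?d) mod dB = j mod dB" by (simp_all add: mod_mod_cancel)
  have mlt: "i mod dB < dB" "j mod dB < dB" using dB0 by auto
  have "map_tensor (\<lambda>Y. Y) (map_tensor (repl_id dA) (Qmix dA dB U) dA dB) r ?d \<rho> $$ (i,j)
      = map_tensor (repl_id dA) (Qmix dA dB U) dA dB (block ?d \<rho> a a') $$ (i mod ?d, j mod ?d)"
    unfolding a_def a'_def using ij by (intro map_tensor_id_index RQ_carrier)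
  also have "\<dots> = (if ci = cj then (\<Sum>e<dA. Qmix dA dB U (block dB (block ?d \<rho> a a') e e) $$ (i mod dB, j mod dB)) else 0)"
    unfolding ci_def cj_def mm[symmetric] using md by (intro map_tensor_repl_index Qmix_lin)
  also have "\<dots> = (if ci = cj then (\<Sum>e<dA. \<Sum>m<dA. complex_of_real (1 / real dA) * P e m) else 0)"
  proof -
    have "Qmix dA dB U (block dB (block ?d \<rho> a a') e e) $$ (i mod dB, j mod dB) = (\<Sum>m<dA. complex_of_real (1 / real dA) * P e m)"
      if "e < dA" for e
    proof -
      have bb: "block dB (block ?d \<rho> a a') e e $$ (s,t) = \<rho> $$ (a*?d+e*dB+s, a'*?d+e*dB+t)" if "s < dB" "t < dB" for s t
      proof -
        have "e*dB+s < ?d" "e*dB+t < ?d" using \<open>e < dA\<close> that by (auto intro: idx_lt)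
        then show ?thesis using that by (simp add: block_index add.assoc)
      qed
      have "Qmix dA dB U (block dB (block ?d \<rho> a a') e e) $$ (i mod dB, j mod dB)
          = (\<Sum>m<dA. P e m) / of_nat dA"
        unfolding P_def using mlt by (simp add: Qmix_index bb)
      then show ?thesis by (simp add: sum_divide_distrib)
    qed
    then show ?thesis by simp
  qed
  also have "\<dots> = (\<Sum>c<dA. \<Sum>e<dA. \<Sum>m<dA. complex_of_real (1 / real dA) *
          (\<Sum>k<r*?d. \<Sum>l<r*?d. Asig c e m i k * \<rho> $$ (k,l) * cnj (Asig c e m j l)))"
  proof -
    have inner: "(\<Sum>k<r*?d. \<Sum>l<r*?d. Asig c e m i k * \<rho> $$ (k,l) * cnj (Asig c e m j l))
        = (if ci = c \<and> cj = c then P e m else 0)" if "e < dA" for c e m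
    proof (cases "ci = c \<and> cj = c")
      case True
      have "(\<Sum>k<r*?d. \<Sum>l<r*?d. Asig c e m i k * \<rho> $$ (k,l) * cnj (Asig c e m j l))
          = (\<Sum>k<r*?d. \<Sum>l<r*?d. (if k div ?d = a \<and> (k mod ?d) div dB = e then U m $$ (i mod dB, k mod dB) else 0) * \<rho> $$ (k,l)
              * cnj (if l div ?d = a' \<and> (l mod ?d) div dB = e then U m $$ (j mod dB, l mod dB) else 0))"
        unfolding Asig_def using True unfolding ci_def cj_def a_def a'_def by (intro sum.cong refl) auto
      also have "\<dots> = P e m" unfolding P_def
        by (rule sandwich_collapse2[where F="\<lambda>s. U m $$ (i mod dB, s)" and G="\<lambda>t. U m $$ (j mod dB, t)" and X="\<lambda>k l. \<rho> $$ (k,l)", OF ir that])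
      finally show ?thesis using True by simp
    next
      case False
      then have "Asig c e m i k * \<rho> $$ (k,l) * cnj (Asig c e m j l) = 0" for k l
        unfolding Asig_def ci_def cj_def by auto
      then have "(\<Sum>k<r*?d. \<Sum>l<r*?d. Asig c e m i k * \<rho> $$ (k,l) * cnj (Asig c e m j l)) = 0"
        by (simp only: sum.neutral_const)
      then show ?thesis by (subst if_not_P[OF False])
    qed
    have "(\<Sum>c<dA. \<Sum>e<dA. \<Sum>m<dA. complex_of_real (1 / real dA) *
          (\<Sum>k<r*?d. \<Sum>l<r*?d. Asig c e m i k * \<rho> $$ (k,l) * cnj (Asig c e m j l)))
        = (\<Sum>c<dA. \<Sum>e<dA. \<Sum>m<dA. if ci = c \<and> cj = c then complex_of_real (1 / real dA) * P e m else 0)"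
      by (intro sum.cong refl) (simp add: inner)
    also have "\<dots> = (\<Sum>c<dA. if c = ci then (if cj = ci then (\<Sum>e<dA. \<Sum>m<dA. complex_of_real (1 / real dA) * P e m) else 0) else 0)"
      by (intro sum.cong refl) auto
    also have "\<dots> = (if ci = cj then (\<Sum>e<dA. \<Sum>m<dA. complex_of_real (1 / real dA) * P e m) else 0)"
      using cl by (simp add: sum.delta)
    finally show ?thesis by simp
  qed
  finally show ?thesis .
qed

end

context ctrlsys begin

definition Wv where
  "Wv v c e m k = (if (k mod (dA*dB)) div dB = e then
     (\<Sum>q<dB. cnj (U m $$ (q, k mod dB)) * v ((k div (dA*dB))*(dA*dB) + c*dB + q)) else 0)"

definition Hf where "Hf v m e k = (\<Sum>c<dA. cnj (b m $ c) * Wv v c e m k)"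
definition Yf where "Yf v m k = (\<Sum>e<dA. b m $ e * Hf v m e k)"

lemma W_eq: assumes k: "k < r*(dA*dB)" and c: "c < dA"
  shows "(\<Sum>i<r*(dA*dB). cnj (Asig c e m i k) * v i) = Wv v c e m k"
proof -
  let ?d = "dA*dB"
  have kr: "k div ?d < r" using k div_lt by auto
  have "(\<Sum>i<r*?d. cnj (Asig c e m i k) * v i)
      = (\<Sum>i<r*?d. if i div ?d = k div ?d \<and> (i mod ?d) div dB = c then
           (if (k mod ?d) div dB = e then cnj (U m $$ (i mod dB, k mod dB)) * v i else 0) else 0)"
    unfolding Asig_def by (intro sum.cong refl) auto
  also have "\<dots> = (\<Sum>q<dB. if (k mod ?d) div dB = e then
      cnj (U m $$ (((k div ?d)*?d + c*dB + q) mod dB, k mod dB)) * v ((k div ?d)*?d + c*dB + q) else 0)"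
    by (rule sum_collapse2[OF kr c])
  also have "\<dots> = Wv v c e m k"
    unfolding Wv_def by (simp only: sum_if_const mod_aux3 cong: sum.cong) (auto simp: mod_aux3 intro!: sum.cong)
  finally show ?thesis .
qed

lemma z_eq: assumes k: "k < r*(dA*dB)"
  shows "(\<Sum>i<r*(dA*dB). cnj (Atau i k) * v i) = (\<Sum>m<dA. 1 * Yf v m k)"
proof -
  let ?d = "dA*dB"
  define a where "a = k div ?d"
  define y where "y = k mod ?d"
  define ek where "ek = y div dB"
  define sk where "sk = k mod dB"
  define T where "T m c q = cnj (b m $ c) * b m $ ek * cnj (U m $$ (q, sk)) * v (a*?d + c*dB + q)" for m c q
  have ar: "a < r" using k div_lt unfolding a_def by auto
  have yd: "y < ?d" using k unfolding y_def by (cases "?d = 0"; simp)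
  have dB0: "dB > 0" using yd by (cases dB) auto
  have ekl: "ek < dA" using yd dB0 unfolding ek_def by (auto simp: div_less_iff_less_mult)
  have ym: "y mod dB = sk" unfolding y_def sk_def by (simp add: mod_mod_cancel)
  have "(\<Sum>i<r*?d. cnj (Atau i k) * v i) = (\<Sum>i<r*?d. if i div ?d = a then cnj (Cm $$ (i mod ?d, y)) * v i else 0)"
    unfolding Atau_def a_def y_def by (intro sum.cong refl) auto
  also have "\<dots> = (\<Sum>x<?d. cnj (Cm $$ ((a*?d+x) mod ?d, y)) * v (a*?d+x))"
    by (rule sum_collapse1[OF ar])
  also have "\<dots> = (\<Sum>x<?d. cnj (Cm $$ (x, y)) * v (a*?d+x))"
    by (intro sum.cong refl) simp
  also have "\<dots> = (\<Sum>c<dA. \<Sum>q<dB. cnj (Cm $$ (c*dB+q, y)) * v (a*?d+(c*dB+q)))"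
    by (rule sum_split)
  also have "\<dots> = (\<Sum>c<dA. \<Sum>q<dB. \<Sum>m<dA. T m c q)"
  proof (intro sum.cong refl)
    fix c q assume cq: "c \<in> {..<dA}" "q \<in> {..<dB}"
    have lt: "c*dB+q < ?d" using cq by (intro idx_lt) auto
    show "cnj (Cm $$ (c*dB+q, y)) * v (a*?d+(c*dB+q)) = (\<Sum>m<dA. T m c q)"
      using lt yd cq unfolding T_def ek_def ym[symmetric]
      by (simp add: Cm_index cnj_sum sum_distrib_left sum_distrib_right mult_ac add.assoc)
  qed
  also have "\<dots> = (\<Sum>c<dA. \<Sum>m<dA. \<Sum>q<dB. T m c q)"
    by (rule sum.cong[OF refl], rule sum.swap)
  also have "\<dots> = (\<Sum>m<dA. \<Sum>c<dA. \<Sum>q<dB. T m c q)"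
    by (rule sum.swap)
  also have "\<dots> = (\<Sum>m<dA. 1 * Yf v m k)"
  proof (rule sum.cong[OF refl])
    fix m assume "m \<in> {..<dA}"
    define Z where "Z c = (\<Sum>q<dB. cnj (U m $$ (q, sk)) * v (a*?d + c*dB + q))" for c
    have W: "Wv v c e m k = (if e = ek then Z c else 0)" for c e
      unfolding Wv_def Z_def ek_def y_def sk_def a_def by auto
    have "Yf v m k = (\<Sum>e<dA. if e = ek then b m $ e * (\<Sum>c<dA. cnj (b m $ c) * Z c) else 0)"
      unfolding Yf_def Hf_def W by (intro sum.cong refl) auto
    also have "\<dots> = b m $ ek * (\<Sum>c<dA. cnj (b m $ c) * Z c)"
      using ekl by (simp add: sum.delta)
    also have "\<dots> = (\<Sum>c<dA. \<Sum>q<dB. T m c q)"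
      unfolding Z_def T_def by (simp add: sum_distrib_left mult_ac)
    finally show "(\<Sum>c<dA. \<Sum>q<dB. T m c q) = 1 * Yf v m k" by simp
  qed
  finally show ?thesis .
qed

end

lemma sum_rev3: "(\<Sum>m\<in>A. \<Sum>e\<in>B. \<Sum>c\<in>C. f m e c) = (\<Sum>c\<in>C. \<Sum>e\<in>B. \<Sum>m\<in>A. f m e c)"
proof -
  have "(\<Sum>m\<in>A. \<Sum>e\<in>B. \<Sum>c\<in>C. f m e c) = (\<Sum>e\<in>B. \<Sum>m\<in>A. \<Sum>c\<in>C. f m e c)" by (rule sum.swap)
  also have "\<dots> = (\<Sum>e\<in>B. \<Sum>c\<in>C. \<Sum>m\<in>A. f m e c)" by (rule sum.cong[OF refl], rule sum.swap)
  also have "\<dots> = (\<Sum>c\<in>C. \<Sum>e\<in>B. \<Sum>m\<in>A. f m e c)" by (rule sum.swap)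
  finally show ?thesis .
qed

context ctrlsys begin

lemma part1_ineq:
  assumes dA0: "dA > 0" and rho: "psd (r*(dA*dB)) \<rho>"
  shows "qff (r*(dA*dB)) (ent (map_tensor (\<lambda>Y. Y) (ctrl_channel dA dB b U) r (dA*dB) \<rho>)) v
     \<le> complex_of_real ((real dA)^2) *
        qff (r*(dA*dB)) (ent (map_tensor (\<lambda>Y. Y) (map_tensor (repl_id dA) (Qmix dA dB U) dA dB) r (dA*dB) \<rho>)) v"
proof -
  let ?n = "r*(dA*dB)"
  define G where "G = ent \<rho>"
  have pos: "\<And>f. 0 \<le> qff ?n G f" using rho unfolding psd_iff G_def by blast
  have qt: "qff ?n (ent (map_tensor (\<lambda>Y. Y) (ctrl_channel dA dB b U) r (dA*dB) \<rho>)) v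
      = qff ?n G (\<lambda>k. \<Sum>m<dA. 1 * Yf v m k)"
  proof -
    have "qff ?n (ent (map_tensor (\<lambda>Y. Y) (ctrl_channel dA dB b U) r (dA*dB) \<rho>)) v
        = qff ?n (\<lambda>i j. \<Sum>k<?n. \<Sum>l<?n. Atau i k * G k l * cnj (Atau j l)) v"
      by (rule qff_cong_F) (simp add: ent_def G_def tau_entry)
    also have "\<dots> = qff ?n G (\<lambda>k. \<Sum>i<?n. cnj (Atau i k) * v i)" by (rule qff_sandwich)
    also have "\<dots> = qff ?n G (\<lambda>k. \<Sum>m<dA. 1 * Yf v m k)" by (rule qff_cong_v) (rule z_eq)
    finally show ?thesis .
  qed
  have g1: "qff ?n G (\<lambda>k. \<Sum>m<dA. 1 * Yf v m k) \<le> complex_of_real (real dA) * (\<Sum>m<dA. qff ?n G (Yf v m))"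
    using gram[where \<beta>="\<lambda>_. 1" and w="\<lambda>m. Yf v m" and K=dA and c="real dA" and n="?n" and G=G, OF pos] dA0 by simp
  have g2: "qff ?n G (Yf v m) \<le> (\<Sum>e<dA. qff ?n G (Hf v m e))" if "m < dA" for m
  proof -
    have "qff ?n G (\<lambda>i. \<Sum>e<dA. b m $ e * Hf v m e i) \<le> complex_of_real 1 * (\<Sum>e<dA. qff ?n G (Hf v m e))"
      by (rule gram[OF pos]) (simp_all add: onb_norm[OF that])
    moreover have "(\<lambda>i. \<Sum>e<dA. b m $ e * Hf v m e i) = Yf v m" unfolding Yf_def by (rule ext) simp
    ultimately show ?thesis by simp
  qed
  have g3: "qff ?n G (Hf v m e) \<le> (\<Sum>c<dA. qff ?n G (Wv v c e m))" if "m < dA" for m e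
  proof -
    have "qff ?n G (\<lambda>i. \<Sum>c<dA. cnj (b m $ c) * Wv v c e m i) \<le> complex_of_real 1 * (\<Sum>c<dA. qff ?n G (Wv v c e m))"
      by (rule gram[OF pos]) (simp_all add: onb_sum[OF that that])
    moreover have "(\<lambda>i. \<Sum>c<dA. cnj (b m $ c) * Wv v c e m i) = Hf v m e" unfolding Hf_def by (rule ext) simp
    ultimately show ?thesis by simp
  qed
  have qs: "qff ?n (ent (map_tensor (\<lambda>Y. Y) (map_tensor (repl_id dA) (Qmix dA dB U) dA dB) r (dA*dB) \<rho>)) v
      = (\<Sum>c<dA. \<Sum>e<dA. \<Sum>m<dA. complex_of_real (1 / real dA) * qff ?n G (Wv v c e m))"
  proof -
    define S where "S c e m i j = (\<Sum>k<?n. \<Sum>l<?n. Asig c e m i k * G k l * cnj (Asig c e m j l))" for c e m i j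
    have "qff ?n (ent (map_tensor (\<lambda>Y. Y) (map_tensor (repl_id dA) (Qmix dA dB U) dA dB) r (dA*dB) \<rho>)) v
        = qff ?n (\<lambda>i j. \<Sum>c<dA. \<Sum>e<dA. \<Sum>m<dA. complex_of_real (1 / real dA) * S c e m i j) v"
      by (rule qff_cong_F) (simp add: ent_def G_def sig_entry S_def)
    also have "\<dots> = (\<Sum>c<dA. \<Sum>e<dA. \<Sum>m<dA. complex_of_real (1 / real dA) * qff ?n (S c e m) v)"
      by (simp only: qff_sum qff_scale)
    also have "\<dots> = (\<Sum>c<dA. \<Sum>e<dA. \<Sum>m<dA. complex_of_real (1 / real dA) * qff ?n G (Wv v c e m))"
    proof (intro sum.cong refl)
      fix c e m assume c: "c \<in> {..<dA}"
      have "qff ?n (S c e m) v = qff ?n G (\<lambda>k. \<Sum>i<?n. cnj (Asig c e m i k) * v i)"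
        unfolding S_def by (rule qff_sandwich)
      also have "\<dots> = qff ?n G (Wv v c e m)" using c by (intro qff_cong_v W_eq) auto
      finally show "complex_of_real (1 / real dA) * qff ?n (S c e m) v = complex_of_real (1 / real dA) * qff ?n G (Wv v c e m)"
        by simp
    qed
    finally show ?thesis .
  qed
  have dApos: "0 \<le> complex_of_real (real dA)" by (simp add: less_eq_complex_def)
  have "qff ?n G (\<lambda>k. \<Sum>m<dA. 1 * Yf v m k) \<le> complex_of_real (real dA) * (\<Sum>m<dA. \<Sum>e<dA. \<Sum>c<dA. qff ?n G (Wv v c e m))"
  proof -
    have "(\<Sum>m<dA. qff ?n G (Yf v m)) \<le> (\<Sum>m<dA. \<Sum>e<dA. \<Sum>c<dA. qff ?n G (Wv v c e m))"
    proof (rule sum_mono)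
      fix m assume m: "m \<in> {..<dA}"
      have "qff ?n G (Yf v m) \<le> (\<Sum>e<dA. qff ?n G (Hf v m e))" using g2 m by auto
      also have "\<dots> \<le> (\<Sum>e<dA. \<Sum>c<dA. qff ?n G (Wv v c e m))"
        by (rule sum_mono) (use g3 m in auto)
      finally show "qff ?n G (Yf v m) \<le> (\<Sum>e<dA. \<Sum>c<dA. qff ?n G (Wv v c e m))" .
    qed
    then have "complex_of_real (real dA) * (\<Sum>m<dA. qff ?n G (Yf v m)) \<le> complex_of_real (real dA) * (\<Sum>m<dA. \<Sum>e<dA. \<Sum>c<dA. qff ?n G (Wv v c e m))"
      by (rule mult_left_mono) (rule dApos)
    with g1 show ?thesis by (rule order_trans)
  qed
  also have "\<dots> = complex_of_real ((real dA)^2) * (\<Sum>c<dA. \<Sum>e<dA. \<Sum>m<dA. complex_of_real (1 / real dA) * qff ?n G (Wv v c e m))"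
  proof -
    have "(\<Sum>m<dA. \<Sum>e<dA. \<Sum>c<dA. qff ?n G (Wv v c e m)) = (\<Sum>c<dA. \<Sum>e<dA. \<Sum>m<dA. qff ?n G (Wv v c e m))"
      by (rule sum_rev3)
    moreover have "complex_of_real (real dA) * X = complex_of_real ((real dA)^2) * (complex_of_real (1 / real dA) * X)" for X
      using dA0 by (simp add: power2_eq_square)
    ultimately show ?thesis by (simp add: sum_distrib_left)
  qed
  finally show ?thesis using qt qs by simp
qed

end

lemma mult_if1: "(x::complex) * (if P then 1 else 0) = (if P then x else 0)" by simp
lemma cnj_if1: "cnj (if P then 1 else 0) * (x::complex) = (if P then x else 0)" by simp

lemma psd_diag: assumes "psd n X" "i < n" shows "0 \<le> X $$ (i,i)"
proof -
  have "0 \<le> qff n (ent X) (\<lambda>j. if j = i then 1 else 0)" using assms(1) unfolding psd_iff by blast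
  also have "qff n (ent X) (\<lambda>j. if j = i then 1 else 0) = X $$ (i,i)"
  proof -
    have "qff n (ent X) (\<lambda>j. if j = i then 1 else 0)
       = (\<Sum>a<n. if a = i then (\<Sum>b<n. if b = i then X $$ (a,b) else 0) else 0)"
      unfolding qff_def ent_def by (simp only: mult_if1 cnj_if1 if_if_eq_conj) (rule sum.cong[OF refl], auto intro!: sum.cong)
    also have "\<dots> = X $$ (i,i)" using assms(2) by (simp add: sum.delta)
    finally show ?thesis .
  qed
  finally show ?thesis .
qed

lemma psd_trace_nonneg: assumes "psd n X" shows "0 \<le> mtrace X"
proof -
  have "dim_row X = n" using assms unfolding psd_def by auto
  then show ?thesis unfolding mtrace_def using psd_diag[OF assms] by (auto intro: sum_nonneg)
qed

context ctrlsys begin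

abbreviation "TAU r \<rho> \<equiv> map_tensor (\<lambda>Y. Y) (ctrl_channel dA dB b U) r (dA*dB) \<rho>"
abbreviation "SIG r \<rho> \<equiv> map_tensor (\<lambda>Y. Y) (map_tensor (repl_id dA) (Qmix dA dB U) dA dB) r (dA*dB) \<rho>"

lemma TAU_carrier: "TAU r \<rho> \<in> carrier_mat (r*(dA*dB)) (r*(dA*dB))"
  unfolding map_tensor_def by (rule msum_carrier)
lemma SIG_carrier: "SIG r \<rho> \<in> carrier_mat (r*(dA*dB)) (r*(dA*dB))"
  unfolding map_tensor_def by (rule msum_carrier)

lemma TAU_herm: assumes "psd (r*(dA*dB)) \<rho>" shows "hermf (r*(dA*dB)) (ent (TAU r \<rho>))"
proof -
  have h: "hermf (r*(dA*dB)) (ent \<rho>)" using assms unfolding psd_iff by blast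
  show ?thesis
    by (rule hermf_cong[OF hermf_sandwich[OF h, where A=Atau]]) (simp add: ent_def tau_entry)
qed

lemma SIG_herm: assumes "psd (r*(dA*dB)) \<rho>" shows "hermf (r*(dA*dB)) (ent (SIG r \<rho>))"
proof -
  have h: "hermf (r*(dA*dB)) (ent \<rho>)" using assms unfolding psd_iff by blast
  have "hermf (r*(dA*dB)) (\<lambda>i j. \<Sum>c<dA. \<Sum>e<dA. \<Sum>m<dA. complex_of_real (1 / real dA) *
          (\<Sum>k<r*(dA*dB). \<Sum>l<r*(dA*dB). Asig c e m i k * ent \<rho> k l * cnj (Asig c e m j l)))"
    by (intro hermf_sum hermf_scale hermf_sandwich h)
  then show ?thesis
    by (rule hermf_cong) (simp add: ent_def sig_entry)
qed

lemma part1_psd: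
  assumes dA0: "dA > 0" and rho: "psd (r*(dA*dB)) \<rho>"
  shows "psd (r*(dA*dB)) (complex_of_real ((real dA)^2) \<cdot>\<^sub>m SIG r \<rho> - TAU r \<rho>)"
proof -
  let ?n = "r*(dA*dB)" and ?c = "complex_of_real ((real dA)^2)"
  have e: "ent (?c \<cdot>\<^sub>m SIG r \<rho> - TAU r \<rho>) i j = ?c * ent (SIG r \<rho>) i j - ent (TAU r \<rho>) i j"
    if "i < ?n" "j < ?n" for i j
    using that TAU_carrier[of r \<rho>] SIG_carrier[of r \<rho>] by (simp add: ent_def)
  have C: "?c \<cdot>\<^sub>m SIG r \<rho> - TAU r \<rho> \<in> carrier_mat ?n ?n"
    using TAU_carrier[of r \<rho>] SIG_carrier[of r \<rho>] by auto
  have H: "hermf ?n (ent (?c \<cdot>\<^sub>m SIG r \<rho> - TAU r \<rho>))"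
    by (rule hermf_cong[OF hermf_diff[OF hermf_scale[OF SIG_herm[OF rho], where c="(real dA)^2"] TAU_herm[OF rho]]]) (metis e)
  have P: "0 \<le> qff ?n (ent (?c \<cdot>\<^sub>m SIG r \<rho> - TAU r \<rho>)) v" for v
  proof -
    have "qff ?n (ent (?c \<cdot>\<^sub>m SIG r \<rho> - TAU r \<rho>)) v = qff ?n (\<lambda>i j. ?c * ent (SIG r \<rho>) i j - ent (TAU r \<rho>) i j) v"
      by (rule qff_cong_F) (metis e)
    also have "\<dots> = ?c * qff ?n (ent (SIG r \<rho>)) v - qff ?n (ent (TAU r \<rho>)) v"
      by (simp only: qff_diff qff_scale)
    finally show ?thesis using part1_ineq[OF dA0 rho, of v] by simp
  qed
  show ?thesis unfolding psd_iff using C H P by blast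
qed

end

context ctrlsys begin

lemma TAU_trace: assumes rho: "\<rho> \<in> carrier_mat (r*(dA*dB)) (r*(dA*dB))"
  shows "mtrace (TAU r \<rho>) = mtrace \<rho>"
proof -
  let ?d = "dA*dB"
  have "mtrace (TAU r \<rho>) = (\<Sum>i<r*?d. TAU r \<rho> $$ (i,i))"
    unfolding mtrace_def using TAU_carrier[of r \<rho>] by simp
  also have "\<dots> = (\<Sum>a<r. \<Sum>x<?d. TAU r \<rho> $$ (a*?d+x, a*?d+x))" by (rule sum_split)
  also have "\<dots> = (\<Sum>a<r. \<Sum>x<?d. \<Sum>s<?d. \<Sum>t<?d. Cm $$ (x, s) * \<rho> $$ (a*?d+s, a*?d+t) * cnj (Cm $$ (x, t)))"
  proof (intro sum.cong refl)
    fix a x assume ax: "a \<in> {..<r}" "x \<in> {..<?d}"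
    have lt: "a*?d+x < r*?d"
    proof -
      have "a*?d+x < a*?d + ?d" using ax by simp
      also have "\<dots> = (a+1)*?d" by simp
      also have "\<dots> \<le> r*?d" using ax by (intro mult_right_mono) auto
      finally show ?thesis .
    qed
    have "TAU r \<rho> $$ (a*?d+x, a*?d+x) = ctrl_channel dA dB b U (block ?d \<rho> a a) $$ (x, x)"
      by (subst map_tensor_id_index[where d="dA*dB"]) (use lt ax in \<open>auto intro!: N_carrier block_carrier\<close>)
    also have "\<dots> = (\<Sum>s<?d. \<Sum>t<?d. Cm $$ (x, s) * block ?d \<rho> a a $$ (s,t) * cnj (Cm $$ (x, t)))"
      unfolding ctrl_channel_def Cm_def[symmetric] using ax by (intro mult3_index Cm_carrier block_carrier) auto
    also have "\<dots> = (\<Sum>s<?d. \<Sum>t<?d. Cm $$ (x, s) * \<rho> $$ (a*?d+s, a*?d+t) * cnj (Cm $$ (x, t)))"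
      by (intro sum.cong refl) (simp add: block_index)
    finally show "TAU r \<rho> $$ (a*?d+x, a*?d+x) = (\<Sum>s<?d. \<Sum>t<?d. Cm $$ (x, s) * \<rho> $$ (a*?d+s, a*?d+t) * cnj (Cm $$ (x, t)))" .
  qed
  also have "\<dots> = (\<Sum>a<r. \<Sum>s<?d. \<Sum>t<?d. \<rho> $$ (a*?d+s, a*?d+t) * (\<Sum>x<?d. Cm $$ (x, s) * cnj (Cm $$ (x, t))))"
  proof (rule sum.cong[OF refl])
    fix a
    have "(\<Sum>x<?d. \<Sum>s<?d. \<Sum>t<?d. Cm $$ (x, s) * \<rho> $$ (a*?d+s, a*?d+t) * cnj (Cm $$ (x, t)))
        = (\<Sum>s<?d. \<Sum>x<?d. \<Sum>t<?d. Cm $$ (x, s) * \<rho> $$ (a*?d+s, a*?d+t) * cnj (Cm $$ (x, t)))"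
      by (rule sum.swap)
    also have "\<dots> = (\<Sum>s<?d. \<Sum>t<?d. \<Sum>x<?d. Cm $$ (x, s) * \<rho> $$ (a*?d+s, a*?d+t) * cnj (Cm $$ (x, t)))"
      by (rule sum.cong[OF refl], rule sum.swap)
    also have "\<dots> = (\<Sum>s<?d. \<Sum>t<?d. \<rho> $$ (a*?d+s, a*?d+t) * (\<Sum>x<?d. Cm $$ (x, s) * cnj (Cm $$ (x, t))))"
      by (simp add: sum_distrib_left mult_ac)
    finally show "(\<Sum>x<?d. \<Sum>s<?d. \<Sum>t<?d. Cm $$ (x, s) * \<rho> $$ (a*?d+s, a*?d+t) * cnj (Cm $$ (x, t)))
        = (\<Sum>s<?d. \<Sum>t<?d. \<rho> $$ (a*?d+s, a*?d+t) * (\<Sum>x<?d. Cm $$ (x, s) * cnj (Cm $$ (x, t))))" .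
  qed
  also have "\<dots> = (\<Sum>a<r. \<Sum>s<?d. \<rho> $$ (a*?d+s, a*?d+s))"
  proof (intro sum.cong refl)
    fix a s assume s: "s \<in> {..<?d}"
    have "(\<Sum>t<?d. \<rho> $$ (a*?d+s, a*?d+t) * (\<Sum>x<?d. Cm $$ (x, s) * cnj (Cm $$ (x, t))))
        = (\<Sum>t<?d. if s = t then \<rho> $$ (a*?d+s, a*?d+t) else 0)"
      using s by (intro sum.cong refl) (simp add: Cm_cols)
    also have "\<dots> = \<rho> $$ (a*?d+s, a*?d+s)" using s by (simp add: sum.delta)
    finally show "(\<Sum>t<?d. \<rho> $$ (a*?d+s, a*?d+t) * (\<Sum>x<?d. Cm $$ (x, s) * cnj (Cm $$ (x, t)))) = \<rho> $$ (a*?d+s, a*?d+s)" .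
  qed
  also have "\<dots> = (\<Sum>i<r*?d. \<rho> $$ (i,i))" by (rule sum_split[symmetric])
  also have "\<dots> = mtrace \<rho>" unfolding mtrace_def using rho by simp
  finally show ?thesis .
qed

lemma SIG_trace: assumes rho: "\<rho> \<in> carrier_mat (r*(dA*dB)) (r*(dA*dB))" and dA1: "dA \<ge> 1"
  shows "mtrace (SIG r \<rho>) = of_nat dA * mtrace \<rho>"
proof -
  let ?d = "dA*dB"
  define Y where "Y a e = block dB (block ?d \<rho> a a) e e" for a e
  have "mtrace (SIG r \<rho>) = (\<Sum>i<r*?d. SIG r \<rho> $$ (i,i))"
    unfolding mtrace_def using SIG_carrier[of r \<rho>] by simp
  also have "\<dots> = (\<Sum>a<r. \<Sum>x<?d. SIG r \<rho> $$ (a*?d+x, a*?d+x))" by (rule sum_split)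
  also have "\<dots> = (\<Sum>a<r. \<Sum>x<?d. \<Sum>e<dA. Qmix dA dB U (Y a e) $$ (x mod dB, x mod dB))"
  proof (intro sum.cong refl)
    fix a x assume ax: "a \<in> {..<r}" "x \<in> {..<?d}"
    have lt: "a*?d+x < r*?d"
    proof -
      have "a*?d+x < a*?d + ?d" using ax by simp
      also have "\<dots> = (a+1)*?d" by simp
      also have "\<dots> \<le> r*?d" using ax by (intro mult_right_mono) auto
      finally show ?thesis .
    qed
    have "SIG r \<rho> $$ (a*?d+x, a*?d+x) = map_tensor (repl_id dA) (Qmix dA dB U) dA dB (block ?d \<rho> a a) $$ (x, x)"
      by (subst map_tensor_id_index[where d="dA*dB"]) (use lt ax in \<open>auto intro!: RQ_carrier\<close>)
    also have "\<dots> = (\<Sum>e<dA. Qmix dA dB U (Y a e) $$ (x mod dB, x mod dB))"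
      unfolding Y_def using ax by (subst map_tensor_repl_index[OF Qmix_lin]) auto
    finally show "SIG r \<rho> $$ (a*?d+x, a*?d+x) = (\<Sum>e<dA. Qmix dA dB U (Y a e) $$ (x mod dB, x mod dB))" .
  qed
  also have "\<dots> = (\<Sum>a<r. \<Sum>c<dA. \<Sum>p<dB. \<Sum>e<dA. Qmix dA dB U (Y a e) $$ (p, p))"
  proof (rule sum.cong[OF refl])
    fix a
    have "(\<Sum>x<?d. \<Sum>e<dA. Qmix dA dB U (Y a e) $$ (x mod dB, x mod dB))
        = (\<Sum>c<dA. \<Sum>p<dB. \<Sum>e<dA. Qmix dA dB U (Y a e) $$ ((c*dB+p) mod dB, (c*dB+p) mod dB))"
      by (rule sum_split)
    also have "\<dots> = (\<Sum>c<dA. \<Sum>p<dB. \<Sum>e<dA. Qmix dA dB U (Y a e) $$ (p, p))"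
      by (intro sum.cong refl) simp
    finally show "(\<Sum>x<?d. \<Sum>e<dA. Qmix dA dB U (Y a e) $$ (x mod dB, x mod dB))
        = (\<Sum>c<dA. \<Sum>p<dB. \<Sum>e<dA. Qmix dA dB U (Y a e) $$ (p, p))" .
  qed
  also have "\<dots> = (\<Sum>a<r. \<Sum>c<dA. \<Sum>e<dA. mtrace (Qmix dA dB U (Y a e)))"
  proof (rule sum.cong[OF refl], rule sum.cong[OF refl])
    fix a c
    have "(\<Sum>p<dB. \<Sum>e<dA. Qmix dA dB U (Y a e) $$ (p, p)) = (\<Sum>e<dA. \<Sum>p<dB. Qmix dA dB U (Y a e) $$ (p, p))"
      by (rule sum.swap)
    also have "\<dots> = (\<Sum>e<dA. mtrace (Qmix dA dB U (Y a e)))"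
      unfolding mtrace_def by (simp add: Qmix_def)
    finally show "(\<Sum>p<dB. \<Sum>e<dA. Qmix dA dB U (Y a e) $$ (p, p)) = (\<Sum>e<dA. mtrace (Qmix dA dB U (Y a e)))" .
  qed
  also have "\<dots> = (\<Sum>a<r. \<Sum>c<dA. \<Sum>e<dA. mtrace (Y a e))"
    unfolding Y_def using dA1 Uun by (intro sum.cong refl Qmix_trace block_carrier) auto
  also have "\<dots> = (\<Sum>a<r. \<Sum>c<dA. \<Sum>e<dA. \<Sum>s<dB. \<rho> $$ (a*?d+(e*dB+s), a*?d+(e*dB+s)))"
  proof (intro sum.cong refl)
    fix a c e assume e: "e \<in> {..<dA}"
    have "mtrace (Y a e) = (\<Sum>s<dB. Y a e $$ (s,s))" unfolding mtrace_def Y_def by (simp add: block_def)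
    also have "\<dots> = (\<Sum>s<dB. \<rho> $$ (a*?d+(e*dB+s), a*?d+(e*dB+s)))"
    proof (rule sum.cong[OF refl])
      fix s assume "s \<in> {..<dB}"
      then have "e*dB+s < ?d" using e by (intro idx_lt) auto
      then show "Y a e $$ (s,s) = \<rho> $$ (a*?d+(e*dB+s), a*?d+(e*dB+s))"
        unfolding Y_def using \<open>s \<in> {..<dB}\<close> by (simp add: block_index)
    qed
    finally show "mtrace (Y a e) = (\<Sum>s<dB. \<rho> $$ (a*?d+(e*dB+s), a*?d+(e*dB+s)))" .
  qed
  also have "\<dots> = (\<Sum>a<r. \<Sum>c<dA. \<Sum>x<?d. \<rho> $$ (a*?d+x, a*?d+x))"
    by (rule sum.cong[OF refl], rule sum.cong[OF refl], rule sum_split[symmetric])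
  also have "\<dots> = (\<Sum>a<r. of_nat dA * (\<Sum>x<?d. \<rho> $$ (a*?d+x, a*?d+x)))" by simp
  also have "\<dots> = of_nat dA * (\<Sum>i<r*?d. \<rho> $$ (i,i))"
    by (simp add: sum_distrib_left sum_split)
  also have "\<dots> = of_nat dA * mtrace \<rho>" unfolding mtrace_def using rho by simp
  finally show ?thesis .
qed

end

lemma mtrace_lin: assumes "S \<in> carrier_mat n n" "T \<in> carrier_mat n n"
  shows "mtrace (c \<cdot>\<^sub>m S - T) = c * mtrace S - mtrace T"
  unfolding mtrace_def using assms by (simp add: sum_subtractf sum_distrib_left)

context ctrlsys begin

lemma Dmax_part1:
  assumes dA1: "dA \<ge> 1" and dens: "density (r*(dA*dB)) \<rho>"
  shows "Dmax (r*(dA*dB)) (TAU r \<rho>) (SIG r \<rho>) \<le> ereal (2 * log 2 (real dA))"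
proof -
  let ?n = "r*(dA*dB)"
  define L where "L = {l::real. psd ?n (complex_of_real l \<cdot>\<^sub>m SIG r \<rho> - TAU r \<rho>)}"
  have rho: "psd ?n \<rho>" and tr1: "mtrace \<rho> = 1" using dens unfolding density_def by auto
  have rc: "\<rho> \<in> carrier_mat ?n ?n" using rho unfolding psd_def by auto
  have dA0: "dA > 0" using dA1 by simp
  have mem: "(real dA)^2 \<in> L" unfolding L_def using part1_psd[OF dA0 rho] by simp
  have low: "1 / real dA \<le> l" if "l \<in> L" for l
  proof -
    have "0 \<le> mtrace (complex_of_real l \<cdot>\<^sub>m SIG r \<rho> - TAU r \<rho>)"
      using that unfolding L_def by (auto intro: psd_trace_nonneg)
    also have "\<dots> = complex_of_real l * (of_nat dA * mtrace \<rho>) - mtrace \<rho>"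
      using mtrace_lin[OF SIG_carrier TAU_carrier] SIG_trace[OF rc dA1] TAU_trace[OF rc] by simp
    also have "\<dots> = complex_of_real (l * real dA - 1)" using tr1 by simp
    finally have "0 \<le> l * real dA - 1" by (simp add: less_eq_complex_def)
    then show ?thesis using dA0 by (simp add: field_simps)
  qed
  have ne: "L \<noteq> {}" using mem by auto
  have bdd: "bdd_below L" unfolding bdd_below_def using low by blast
  have i1: "Inf L \<le> (real dA)^2" using cInf_lower[OF mem bdd] .
  have i2: "1 / real dA \<le> Inf L" using cInf_greatest[OF ne] low by blast
  have ipos: "0 < Inf L" using i2 dA0 by (smt (verit) divide_pos_pos of_nat_0_less_iff)
  have "log 2 (Inf L) \<le> log 2 ((real dA)^2)" using i1 ipos by (intro log_mono) auto
  also have "\<dots> = 2 * log 2 (real dA)" using dA0 by (simp add: log_nat_power)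
  finally have "log 2 (Inf L) \<le> 2 * log 2 (real dA)" .
  moreover have "Dmax ?n (TAU r \<rho>) (SIG r \<rho>) = ereal (log 2 (Inf L))"
    unfolding Dmax_def Let_def L_def[symmetric] using ne by simp
  ultimately show ?thesis by simp
qed

lemma part1:
  assumes dA1: "dA \<ge> 1"
  shows "cond_min_entropy dA dB (ctrl_channel dA dB b U) \<ge> ereal (- 2 * log 2 (real dA))"
proof -
  let ?N = "ctrl_channel dA dB b U"
  have ch: "Qmix dA dB U \<in> {Q. channel dB Q}" using Qmix_channel[OF dA1] Uun by auto
  have D: "Dmax_ch (dA*dB) ?N (map_tensor (repl_id dA) (Qmix dA dB U) dA dB) \<le> ereal (2 * log 2 (real dA))"
    unfolding Dmax_ch_def
  proof (rule SUP_least)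
    fix p assume "p \<in> {(r, \<rho>). density (r * (dA*dB)) \<rho>}"
    then obtain r \<rho> where p: "p = (r, \<rho>)" and dens: "density (r * (dA*dB)) \<rho>" by auto
    show "Dmax (fst p * (dA*dB)) (map_tensor (\<lambda>Y. Y) ?N (fst p) (dA*dB) (snd p))
        (map_tensor (\<lambda>Y. Y) (map_tensor (repl_id dA) (Qmix dA dB U) dA dB) (fst p) (dA*dB) (snd p))
        \<le> ereal (2 * log 2 (real dA))"
      using Dmax_part1[OF dA1 dens] p by simp
  qed
  have "(INF Q\<in>{Q. channel dB Q}. Dmax_ch (dA*dB) ?N (map_tensor (repl_id dA) Q dA dB)) \<le> ereal (2 * log 2 (real dA))"
    using INF_lower[OF ch, of "\<lambda>Q. Dmax_ch (dA*dB) ?N (map_tensor (repl_id dA) Q dA dB)"] D by (rule order_trans)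
  then have "- ereal (2 * log 2 (real dA)) \<le> - (INF Q\<in>{Q. channel dB Q}. Dmax_ch (dA*dB) ?N (map_tensor (repl_id dA) Q dA dB))"
    by (simp only: ereal_minus_le_minus)
  then show ?thesis unfolding cond_min_entropy_def by simp
qed

end

lemma psd_proj: assumes c: "c \<ge> 0"
  shows "psd n (mat n n (\<lambda>(i,j). if P i \<and> P j then complex_of_real c else 0))"
proof -
  define X where "X = mat n n (\<lambda>(i,j). if P i \<and> P j then complex_of_real c else 0)"
  have C: "X \<in> carrier_mat n n" unfolding X_def by auto
  have H: "hermf n (ent X)" unfolding hermf_def ent_def X_def by auto
  have Q: "0 \<le> qff n (ent X) v" for v
  proof -
    define S where "S = (\<Sum>i<n. if P i then v i else 0)"
    have "qff n (ent X) v = complex_of_real c * ((\<Sum>i<n. cnj (if P i then v i else 0)) * (\<Sum>j<n. if P j then v j else 0))"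
    proof -
      have "complex_of_real c * ((\<Sum>i<n. cnj (if P i then v i else 0)) * (\<Sum>j<n. if P j then v j else 0))
          = (\<Sum>i<n. \<Sum>j<n. complex_of_real c * (cnj (if P i then v i else 0) * (if P j then v j else 0)))"
        by (subst sum_product) (simp only: sum_distrib_left)
      also have "\<dots> = qff n (ent X) v"
        unfolding qff_def ent_def X_def by (intro sum.cong refl) (auto simp: mult_ac)
      finally show ?thesis by simp
    qed
    also have "\<dots> = complex_of_real c * (cnj S * S)" unfolding S_def by (simp add: cnj_sum)
    also have "\<dots> = complex_of_real (c * (cmod S)^2)"
    proof -
      have "cnj S * S = complex_of_real ((cmod S)^2)" by (metis complex_norm_square mult.commute of_real_power)
      then show ?thesis by simp
    qed
    finally show ?thesis using c by (simp add: less_eq_complex_def)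
  qed
  show ?thesis using C H Q unfolding psd_iff X_def by blast
qed

definition projm :: "nat \<Rightarrow> real \<Rightarrow> complex mat" where
  "projm m c = mat (m*m) (m*m) (\<lambda>(i,j). if i div m = i mod m \<and> j div m = j mod m then complex_of_real c else 0)"

lemma projm_psd: "c \<ge> 0 \<Longrightarrow> psd (m*m) (projm m c)"
  unfolding projm_def by (rule psd_proj)

lemma projm_block: assumes "a < m" "a' < m" "x < m" "y < m"
  shows "block m (projm m c) a a' $$ (x,y) = (if x = a \<and> y = a' then complex_of_real c else 0)"
proof -
  have "a*m+x < m*m" "a'*m+y < m*m" using assms idx_lt[of a m x m] idx_lt[of a' m y m] by auto
  then show ?thesis using assms unfolding projm_def by (auto simp: block_index)
qed

lemma projm_trace: assumes "m > 0" shows "mtrace (projm m (1 / real m)) = 1"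
proof -
  have "mtrace (projm m (1 / real m)) = (\<Sum>i<m*m. if i div m = i mod m then complex_of_real (1 / real m) else 0)"
    unfolding mtrace_def projm_def by (intro sum.cong refl) auto
  also have "\<dots> = (\<Sum>a<m. \<Sum>x<m. if a = x then complex_of_real (1 / real m) else 0)"
    by (subst sum_split) (intro sum.cong refl, auto)
  also have "\<dots> = (\<Sum>a<m. complex_of_real (1 / real m))" by (simp add: sum.delta)
  also have "\<dots> = 1" using assms by simp
  finally show ?thesis .
qed

context ctrlsys begin

definition psi where "psi i = Cm $$ (i mod (dA*dB), i div (dA*dB))"

abbreviation "RHO0 \<equiv> projm (dA*dB) (1 / real (dA*dB))"

lemma tau0_entry: assumes ij: "i < (dA*dB)*(dA*dB)" "j < (dA*dB)*(dA*dB)"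
  shows "TAU (dA*dB) RHO0 $$ (i,j) = complex_of_real (1 / real (dA*dB)) * (psi i * cnj (psi j))"
proof -
  let ?d = "dA*dB"
  let ?c = "complex_of_real (1 / real (dA*dB))"
  have ir: "i div ?d < ?d" "j div ?d < ?d" using ij div_lt by auto
  have md: "i mod ?d < ?d" "j mod ?d < ?d" using ij by (cases "?d = 0"; simp)+
  have "TAU ?d RHO0 $$ (i,j) = ctrl_channel dA dB b U (block ?d RHO0 (i div ?d) (j div ?d)) $$ (i mod ?d, j mod ?d)"
    using ij by (intro map_tensor_id_index N_carrier block_carrier)
  also have "\<dots> = (\<Sum>s<?d. \<Sum>t<?d. Cm $$ (i mod ?d, s) * block ?d RHO0 (i div ?d) (j div ?d) $$ (s,t) * cnj (Cm $$ (j mod ?d, t)))"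
    unfolding ctrl_channel_def Cm_def[symmetric] using md by (intro mult3_index Cm_carrier block_carrier)
  also have "\<dots> = (\<Sum>s<?d. \<Sum>t<?d. if s = i div ?d then (if t = j div ?d then Cm $$ (i mod ?d, s) * ?c * cnj (Cm $$ (j mod ?d, t)) else 0) else 0)"
    using ir by (intro sum.cong refl) (simp add: projm_block)
  also have "\<dots> = (\<Sum>s<?d. if s = i div ?d then (\<Sum>t<?d. if t = j div ?d then Cm $$ (i mod ?d, s) * ?c * cnj (Cm $$ (j mod ?d, t)) else 0) else 0)"
    by (simp only: sum_if_const)
  also have "\<dots> = Cm $$ (i mod ?d, i div ?d) * ?c * cnj (Cm $$ (j mod ?d, j div ?d))"
    using ir by (simp only: sum.delta finite_lessThan lessThan_iff if_True)
  finally show ?thesis unfolding psi_def by (simp add: mult_ac)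
qed

lemma psi_norm: "(\<Sum>i<(dA*dB)*(dA*dB). cnj (psi i) * psi i) = of_nat (dA*dB)"
proof -
  let ?d = "dA*dB"
  have "(\<Sum>i<?d*?d. cnj (psi i) * psi i) = (\<Sum>a<?d. \<Sum>x<?d. cnj (psi (a*?d+x)) * psi (a*?d+x))"
    by (rule sum_split)
  also have "\<dots> = (\<Sum>a<?d. \<Sum>x<?d. Cm $$ (x,a) * cnj (Cm $$ (x,a)))"
    unfolding psi_def by (intro sum.cong refl) (simp add: mult.commute)
  also have "\<dots> = (\<Sum>a<?d. 1)" by (intro sum.cong refl) (simp add: Cm_cols)
  finally show ?thesis by simp
qed

lemma qtau0: "qff ((dA*dB)*(dA*dB)) (ent (TAU (dA*dB) RHO0)) psi = of_nat (dA*dB)"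
proof -
  let ?d = "dA*dB"
  let ?c = "complex_of_real (1 / real (dA*dB))"
  have "qff (?d*?d) (ent (TAU ?d RHO0)) psi = (\<Sum>i<?d*?d. \<Sum>j<?d*?d. ?c * ((cnj (psi i) * psi i) * (cnj (psi j) * psi j)))"
    unfolding qff_def ent_def
  proof (intro sum.cong refl)
    fix i j assume "i \<in> {..<?d*?d}" "j \<in> {..<?d*?d}"
    then have "TAU ?d RHO0 $$ (i,j) = ?c * (psi i * cnj (psi j))" by (intro tau0_entry) auto
    then show "cnj (psi i) * TAU ?d RHO0 $$ (i,j) * psi j = ?c * ((cnj (psi i) * psi i) * (cnj (psi j) * psi j))"
      by (simp add: mult_ac)
  qed
  also have "\<dots> = ?c * ((\<Sum>i<?d*?d. cnj (psi i) * psi i) * (\<Sum>j<?d*?d. cnj (psi j) * psi j))"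
    by (subst sum_product) (simp only: sum_distrib_left)
  also have "\<dots> = of_nat ?d"
    unfolding psi_norm by (cases "?d = 0") (simp_all add: power2_eq_square)
  finally show ?thesis .
qed

end

lemma lin_map_zero: assumes Q: "lin_map d Q" and pq: "p < d" "q < d" shows "Q (0\<^sub>m d d) $$ (p,q) = 0"
proof -
  have z: "0 \<cdot>\<^sub>m 0\<^sub>m d d = (0\<^sub>m d d :: complex mat)" by (rule eq_matI) auto
  have C: "Q (0\<^sub>m d d) \<in> carrier_mat d d" by (rule lin_map_carrier[OF Q]) simp
  have "Q (0 \<cdot>\<^sub>m 0\<^sub>m d d) = 0 \<cdot>\<^sub>m Q (0\<^sub>m d d)" by (rule lin_map_smult[OF Q]) simp
  then have e: "Q (0\<^sub>m d d) = 0 \<cdot>\<^sub>m Q (0\<^sub>m d d)" by (simp only: z)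
  have "(0 \<cdot>\<^sub>m Q (0\<^sub>m d d)) $$ (p,q) = 0 * Q (0\<^sub>m d d) $$ (p,q)"
    using C pq by (intro index_smult_mat(1)) auto
  then show ?thesis using e by simp
qed

lemma digit_eq: "s < dB \<Longrightarrow> (c*dB + s = (a::nat)) \<longleftrightarrow> (a div dB = c \<and> a mod dB = s)"
proof
  assume "s < dB" "c*dB + s = a" then show "a div dB = c \<and> a mod dB = s" by auto
next
  assume "s < dB" "a div dB = c \<and> a mod dB = s"
  then show "c*dB + s = a" using div_mult_mod_eq[of a dB] by simp
qed

lemma eunit_dims[simp]: "dim_row (eunit d a a') = d" "dim_col (eunit d a a') = d"
  unfolding eunit_def by auto

definition Jm where "Jm Q dB = map_tensor (\<lambda>Y. Y) Q dB dB (projm dB 1)"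

lemma J_entry: assumes Q: "lin_map dB Q" and kl: "k < dB*dB" "l < dB*dB"
  shows "Jm Q dB $$ (k,l) = Q (eunit dB (k div dB) (l div dB)) $$ (k mod dB, l mod dB)"
proof -
  have ir: "k div dB < dB" "l div dB < dB" using kl div_lt by auto
  have blk: "block dB (projm dB 1) a a' = eunit dB a a'" if "a < dB" "a' < dB" for a a'
  proof (rule eq_matI)
    fix x y assume "x < dim_row (eunit dB a a')" "y < dim_col (eunit dB a a')"
    then have "x < dB" "y < dB" by (auto simp: eunit_def)
    then show "block dB (projm dB 1) a a' $$ (x,y) = eunit dB a a' $$ (x,y)"
      using that by (simp add: projm_block eunit_index)
  qed (auto simp: eunit_def block_def)
  have "Jm Q dB $$ (k,l) = Q (block dB (projm dB 1) (k div dB) (l div dB)) $$ (k mod dB, l mod dB)"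
    unfolding Jm_def using kl by (intro map_tensor_id_index lin_map_carrier[OF Q] block_carrier)
  then show ?thesis using blk[OF ir] by simp
qed

lemma J_psd: assumes "channel dB Q" shows "psd (dB*dB) (Jm Q dB)"
proof -
  have "\<forall>r X. psd (r * dB) X \<longrightarrow> psd (r * dB) (map_tensor (\<lambda>Y. Y) Q r dB X)"
    using assms unfolding channel_def by blast
  then have "psd (dB * dB) (projm dB 1) \<longrightarrow> psd (dB * dB) (map_tensor (\<lambda>Y. Y) Q dB dB (projm dB 1))" by blast
  then show ?thesis using projm_psd[of 1 dB] unfolding Jm_def by simp
qed

context ctrlsys begin

abbreviation "SIGQ Q \<equiv> map_tensor (\<lambda>Y. Y) (map_tensor (repl_id dA) Q dA dB) (dA*dB) (dA*dB) RHO0"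

lemma block_rho0: assumes "a < dA*dB" "a' < dA*dB" "c < dA"
  shows "block dB (block (dA*dB) RHO0 a a') c c = (if a div dB = c \<and> a' div dB = c
      then complex_of_real (1 / real (dA*dB)) \<cdot>\<^sub>m eunit dB (a mod dB) (a' mod dB) else 0\<^sub>m dB dB)"
proof (rule eq_matI)
  fix s t assume st: "s < dim_row (if a div dB = c \<and> a' div dB = c
      then complex_of_real (1 / real (dA*dB)) \<cdot>\<^sub>m eunit dB (a mod dB) (a' mod dB) else 0\<^sub>m dB dB)"
     "t < dim_col (if a div dB = c \<and> a' div dB = c
      then complex_of_real (1 / real (dA*dB)) \<cdot>\<^sub>m eunit dB (a mod dB) (a' mod dB) else 0\<^sub>m dB dB)"
  then have st': "s < dB" "t < dB" by (auto simp: eunit_def split: if_splits)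
  have lt: "c*dB+s < dA*dB" "c*dB+t < dA*dB" using st' assms by (auto intro: idx_lt)
  have "block dB (block (dA*dB) RHO0 a a') c c $$ (s,t) = block (dA*dB) RHO0 a a' $$ (c*dB+s, c*dB+t)"
    using st' by (simp add: block_index)
  also have "\<dots> = (if c*dB+s = a \<and> c*dB+t = a' then complex_of_real (1 / real (dA*dB)) else 0)"
    using lt assms by (simp add: projm_block)
  also have "\<dots> = (if a div dB = c \<and> a' div dB = c then complex_of_real (1 / real (dA*dB)) * (if s = a mod dB \<and> t = a' mod dB then 1 else 0) else 0)"
    using digit_eq[OF st'(1), of c a] digit_eq[OF st'(2), of c a'] by auto
  finally show "block dB (block (dA*dB) RHO0 a a') c c $$ (s,t) = (if a div dB = c \<and> a' div dB = c
      then complex_of_real (1 / real (dA*dB)) \<cdot>\<^sub>m eunit dB (a mod dB) (a' mod dB) else 0\<^sub>m dB dB) $$ (s,t)"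
    using st' by (auto simp: eunit_index)
qed (auto simp: block_def eunit_def)

lemma sig0_entry: assumes Q: "lin_map dB Q" and ij: "i < (dA*dB)*(dA*dB)" "j < (dA*dB)*(dA*dB)"
  shows "SIGQ Q $$ (i,j) = (if (i mod (dA*dB)) div dB = (j mod (dA*dB)) div dB \<and> (i div (dA*dB)) div dB = (j div (dA*dB)) div dB
     then complex_of_real (1 / real (dA*dB)) * Jm Q dB $$ (((i div (dA*dB)) mod dB)*dB + i mod dB, ((j div (dA*dB)) mod dB)*dB + j mod dB) else 0)"
proof -
  let ?d = "dA*dB"
  let ?c = "complex_of_real (1 / real (dA*dB))"
  define a where "a = i div ?d" define a' where "a' = j div ?d"
  have ir: "a < ?d" "a' < ?d" using ij div_lt unfolding a_def a'_def by auto
  have md: "i mod ?d < ?d" "j mod ?d < ?d" using ij by (cases "?d = 0"; simp)+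
  have dB0: "dB > 0" using md by (cases dB) auto
  have al: "a div dB < dA" "a' div dB < dA" using ir dB0 by (auto simp: div_less_iff_less_mult)
  have mm: "(i mod ?d) mod dB = i mod dB" "(j mod ?d) mod dB = j mod dB" by (simp_all add: mod_mod_cancel)
  have mlt: "i mod dB < dB" "j mod dB < dB" "a mod dB < dB" "a' mod dB < dB" using dB0 by auto
  have "SIGQ Q $$ (i,j) = map_tensor (repl_id dA) Q dA dB (block ?d RHO0 a a') $$ (i mod ?d, j mod ?d)"
    unfolding a_def a'_def using ij by (intro map_tensor_id_index RQ_carrier)
  also have "\<dots> = (if (i mod ?d) div dB = (j mod ?d) div dB then (\<Sum>c<dA. Q (block dB (block ?d RHO0 a a') c c) $$ (i mod dB, j mod dB)) else 0)"
    unfolding mm[symmetric] using md by (intro map_tensor_repl_index Q)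
  also have "(\<Sum>c<dA. Q (block dB (block ?d RHO0 a a') c c) $$ (i mod dB, j mod dB))
      = (\<Sum>c<dA. if c = a div dB then (if a' div dB = a div dB then ?c * Q (eunit dB (a mod dB) (a' mod dB)) $$ (i mod dB, j mod dB) else 0) else 0)"
  proof (rule sum.cong[OF refl])
    fix c assume c: "c \<in> {..<dA}"
    show "Q (block dB (block ?d RHO0 a a') c c) $$ (i mod dB, j mod dB)
      = (if c = a div dB then (if a' div dB = a div dB then ?c * Q (eunit dB (a mod dB) (a' mod dB)) $$ (i mod dB, j mod dB) else 0) else 0)"
    proof (cases "a div dB = c \<and> a' div dB = c")
      case True
      have "Q (block dB (block ?d RHO0 a a') c c) = Q (?c \<cdot>\<^sub>m eunit dB (a mod dB) (a' mod dB))"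
        using block_rho0[OF ir] c True by simp
      also have "\<dots> = ?c \<cdot>\<^sub>m Q (eunit dB (a mod dB) (a' mod dB))" by (rule lin_map_smult[OF Q eunit_carrier])
      moreover have QC: "Q (eunit dB (a mod dB) (a' mod dB)) \<in> carrier_mat dB dB"
        by (rule lin_map_carrier[OF Q eunit_carrier])
      ultimately show ?thesis using True mlt by (simp add: carrier_matD(1)[OF QC] carrier_matD(2)[OF QC])
    next
      case False
      have c': "c < dA" using c by simp
      have "Q (block dB (block ?d RHO0 a a') c c) = Q (0\<^sub>m dB dB)"
        by (subst block_rho0[OF ir c'], subst if_not_P[OF False], rule refl)
      then show ?thesis using False lin_map_zero[OF Q mlt(1,2)] by auto
    qed
  qed
  also have "\<dots> = (if a' div dB = a div dB then ?c * Q (eunit dB (a mod dB) (a' mod dB)) $$ (i mod dB, j mod dB) else 0)"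
    using al by (simp only: sum.delta finite_lessThan lessThan_iff if_True)
  also have "Q (eunit dB (a mod dB) (a' mod dB)) $$ (i mod dB, j mod dB) = Jm Q dB $$ ((a mod dB)*dB + i mod dB, (a' mod dB)*dB + j mod dB)"
  proof -
    have lt: "(a mod dB)*dB + i mod dB < dB*dB" "(a' mod dB)*dB + j mod dB < dB*dB" using mlt by (auto intro: idx_lt)
    show ?thesis using J_entry[OF Q lt] mlt by simp
  qed
  finally show ?thesis unfolding a_def a'_def by auto
qed

end

lemma gram_expand:
  fixes \<beta> :: "nat \<Rightarrow> nat \<Rightarrow> nat \<Rightarrow> complex"
  assumes orth: "\<And>m m'. m < K \<Longrightarrow> m' < K \<Longrightarrow> (\<Sum>g<K1. \<Sum>h<K2. cnj (\<beta> g h m) * \<beta> g h m') = (if m = m' then 1 else 0)"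
  shows "(\<Sum>g<K1. \<Sum>h<K2. qff n G (\<lambda>k. \<Sum>m<K. \<beta> g h m * u m k)) = (\<Sum>m<K. qff n G (u m))"
proof -
  define M where "M m m' = (\<Sum>i<n. \<Sum>j<n. cnj (u m i) * G i j * cnj (cnj (u m' j)))" for m m'
  have MQ: "qff n G (\<lambda>k. \<Sum>m<K. \<beta> g h m * u m k) = qff K M (\<beta> g h)" for g h
  proof -
    have "qff K M (\<beta> g h) = qff n G (\<lambda>i. \<Sum>k<K. cnj (cnj (u k i)) * \<beta> g h k)"
      unfolding M_def by (rule qff_sandwich)
    then show ?thesis by (simp add: mult_ac)
  qed
  have "(\<Sum>g<K1. \<Sum>h<K2. qff n G (\<lambda>k. \<Sum>m<K. \<beta> g h m * u m k))
      = (\<Sum>g<K1. \<Sum>h<K2. \<Sum>m<K. \<Sum>m'<K. M m m' * (cnj (\<beta> g h m) * \<beta> g h m'))"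
    by (simp only: MQ) (simp add: qff_def mult_ac)
  also have "\<dots> = (\<Sum>m<K. \<Sum>m'<K. \<Sum>g<K1. \<Sum>h<K2. M m m' * (cnj (\<beta> g h m) * \<beta> g h m'))"
    by (rule sum_swap4)
  also have "\<dots> = (\<Sum>m<K. \<Sum>m'<K. M m m' * (if m = m' then 1 else 0))"
    by (intro sum.cong refl) (simp add: sum_distrib_left[symmetric] orth)
  also have "\<dots> = (\<Sum>m<K. M m m)"
  proof (rule sum.cong[OF refl])
    fix m assume "m \<in> {..<K}"
    have "(\<Sum>m'<K. M m m' * (if m = m' then 1 else 0)) = (\<Sum>m'<K. if m = m' then M m m' else 0)"
      by (rule sum.cong) auto
    also have "\<dots> = M m m" using \<open>m \<in> {..<K}\<close> by simp
    finally show "(\<Sum>m'<K. M m m' * (if m = m' then 1 else 0)) = M m m" .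
  qed
  also have "\<dots> = (\<Sum>m<K. qff n G (u m))" unfolding M_def qff_def by simp
  finally show ?thesis .
qed

context ctrlsys begin

definition A2 where
  "A2 g h i k = (if (i div (dA*dB)) div dB = g \<and> (i mod (dA*dB)) div dB = h \<and> k = ((i div (dA*dB)) mod dB)*dB + i mod dB then 1 else (0::complex))"

definition kidx where "kidx i = ((i div (dA*dB)) mod dB)*dB + i mod dB"

definition istar where "istar g h k = (g*dB + k div dB)*(dA*dB) + (h*dB + k mod dB)"

lemma kidx_lt: "dB > 0 \<Longrightarrow> kidx i < dB*dB" unfolding kidx_def by (intro idx_lt) auto

lemma sig0_sand: assumes Q: "lin_map dB Q" and ij: "i < (dA*dB)*(dA*dB)" "j < (dA*dB)*(dA*dB)"
  shows "SIGQ Q $$ (i,j) = (\<Sum>g<dA. \<Sum>h<dA. complex_of_real (1 / real (dA*dB)) *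
     (\<Sum>k<dB*dB. \<Sum>l<dB*dB. A2 g h i k * ent (Jm Q dB) k l * cnj (A2 g h j l)))"
proof -
  let ?d = "dA*dB"
  let ?c = "complex_of_real (1 / real (dA*dB))"
  define gi where "gi = (i div ?d) div dB" define gj where "gj = (j div ?d) div dB"
  define hi where "hi = (i mod ?d) div dB" define hj where "hj = (j mod ?d) div dB"
  have md: "i mod ?d < ?d" "j mod ?d < ?d" using ij by (cases "?d = 0"; simp)+
  have dB0: "dB > 0" using md by (cases dB) auto
  have ir: "i div ?d < ?d" "j div ?d < ?d" using ij div_lt by auto
  have gl: "gi < dA" "gj < dA" "hi < dA" "hj < dA" using md ir dB0 unfolding gi_def gj_def hi_def hj_def
    by (auto simp: div_less_iff_less_mult)
  have inner: "(\<Sum>k<dB*dB. \<Sum>l<dB*dB. A2 g h i k * ent (Jm Q dB) k l * cnj (A2 g h j l))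
      = (if g = gi then (if h = hi then (if gj = gi \<and> hj = hi then ent (Jm Q dB) (kidx i) (kidx j) else 0) else 0) else 0)" for g h
  proof -
    have "(\<Sum>k<dB*dB. \<Sum>l<dB*dB. A2 g h i k * ent (Jm Q dB) k l * cnj (A2 g h j l))
        = (\<Sum>k<dB*dB. \<Sum>l<dB*dB. if gi = g \<and> hi = h \<and> gj = g \<and> hj = h then
             (if k = kidx i then (if l = kidx j then ent (Jm Q dB) k l else 0) else 0) else 0)"
      unfolding A2_def gi_def hi_def gj_def hj_def kidx_def by (intro sum.cong refl) auto
    also have "\<dots> = (if gi = g \<and> hi = h \<and> gj = g \<and> hj = h then ent (Jm Q dB) (kidx i) (kidx j) else 0)"
      using kidx_lt[OF dB0] by (simp only: sum_if_const sum.delta finite_lessThan lessThan_iff if_True)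
    finally show ?thesis by auto
  qed
  have "(\<Sum>g<dA. \<Sum>h<dA. ?c * (\<Sum>k<dB*dB. \<Sum>l<dB*dB. A2 g h i k * ent (Jm Q dB) k l * cnj (A2 g h j l)))
      = (\<Sum>g<dA. \<Sum>h<dA. if g = gi then (if h = hi then ?c * (if gj = gi \<and> hj = hi then ent (Jm Q dB) (kidx i) (kidx j) else 0) else 0) else 0)"
    by (intro sum.cong refl) (simp only: inner, auto)
  also have "\<dots> = ?c * (if gj = gi \<and> hj = hi then ent (Jm Q dB) (kidx i) (kidx j) else 0)"
    using gl by (simp only: sum_if_const sum.delta finite_lessThan lessThan_iff if_True)
  also have "\<dots> = SIGQ Q $$ (i,j)"
    unfolding sig0_entry[OF Q ij] gi_def gj_def hi_def hj_def kidx_def ent_def by auto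
  finally show ?thesis by simp
qed

lemma istar_char: assumes g: "g < dA" and h: "h < dA" and k: "k < dB*dB"
  shows "((i div (dA*dB)) div dB = g \<and> (i mod (dA*dB)) div dB = h \<and> k = ((i div (dA*dB)) mod dB)*dB + i mod dB)
     \<longleftrightarrow> i = istar g h k"
proof -
  let ?d = "dA*dB"
  have dB0: "dB > 0" using k by (cases dB) auto
  have kd: "k div dB < dB" using k div_lt by auto
  have km: "k mod dB < dB" using dB0 by simp
  have ql: "g*dB + k div dB < ?d" using g kd by (rule idx_lt)
  have xl: "h*dB + k mod dB < ?d" using h km by (rule idx_lt)
  show ?thesis
  proof
    assume c: "(i div ?d) div dB = g \<and> (i mod ?d) div dB = h \<and> k = ((i div ?d) mod dB)*dB + i mod dB"
    have im: "i mod dB < dB" using dB0 by simp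
    have k1: "k div dB = (i div ?d) mod dB" "k mod dB = i mod dB" using c im by auto
    have e1: "i div ?d = g*dB + (i div ?d) mod dB" using c div_mult_mod_eq[of "i div ?d" dB] by simp
    have e2: "i mod ?d = h*dB + i mod dB"
      using c div_mult_mod_eq[of "i mod ?d" dB] by (simp add: mod_mod_cancel)
    have "i = (i div ?d)*?d + i mod ?d" by (rule div_mult_mod_eq[symmetric])
    also have "\<dots> = (g*dB + k div dB)*?d + (h*dB + k mod dB)" using e1 e2 k1 by simp
    finally show "i = istar g h k" unfolding istar_def .
  next
    assume ie: "i = istar g h k"
    have d1: "i div ?d = g*dB + k div dB" "i mod ?d = h*dB + k mod dB"
      unfolding ie istar_def using xl by (simp_all only: divmod_aux)
    have d2: "(g*dB + k div dB) div dB = g" "(g*dB + k div dB) mod dB = k div dB" using kd by simp_all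
    have d3: "(h*dB + k mod dB) div dB = h" "(h*dB + k mod dB) mod dB = k mod dB" using km by simp_all
    have d4: "i mod dB = k mod dB"
    proof -
      have "i mod dB = (i mod ?d) mod dB" by (simp add: mod_mod_cancel)
      then show ?thesis using d1 d3 by simp
    qed
    show "(i div ?d) div dB = g \<and> (i mod ?d) div dB = h \<and> k = ((i div ?d) mod dB)*dB + i mod dB"
      using d1 d2 d3 d4 by simp
  qed
qed

lemma istar_lt: assumes "g < dA" "h < dA" "k < dB*dB" shows "istar g h k < (dA*dB)*(dA*dB)"
proof -
  have dB0: "dB > 0" using assms(3) by (cases dB) auto
  have ql: "g*dB + k div dB < dA*dB" using assms(1) div_lt[OF assms(3)] by (rule idx_lt)
  have xl: "h*dB + k mod dB < dA*dB" using assms(2) dB0 by (intro idx_lt) auto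
  show ?thesis unfolding istar_def using ql xl by (rule idx_lt)
qed

lemma w_eq: assumes "g < dA" "h < dA" "k < dB*dB"
  shows "(\<Sum>i<(dA*dB)*(dA*dB). cnj (A2 g h i k) * psi i) = psi (istar g h k)"
proof -
  have "(\<Sum>i<(dA*dB)*(dA*dB). cnj (A2 g h i k) * psi i) = (\<Sum>i<(dA*dB)*(dA*dB). if i = istar g h k then psi i else 0)"
  proof (rule sum.cong[OF refl])
    fix i
    show "cnj (A2 g h i k) * psi i = (if i = istar g h k then psi i else 0)"
      unfolding A2_def using istar_char[OF assms, of i] by auto
  qed
  also have "\<dots> = psi (istar g h k)" using istar_lt[OF assms] by simp
  finally show ?thesis .
qed

definition um where "um m k = U m $$ (k mod dB, k div dB)"

lemma psi_istar: assumes "g < dA" "h < dA" "k < dB*dB"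
  shows "psi (istar g h k) = (\<Sum>m<dA. (b m $ h * cnj (b m $ g)) * um m k)"
proof -
  let ?d = "dA*dB"
  have dB0: "dB > 0" using assms(3) by (cases dB) auto
  have kd: "k div dB < dB" using assms(3) div_lt by auto
  have km: "k mod dB < dB" using dB0 by simp
  have ql: "g*dB + k div dB < ?d" using assms(1) kd by (rule idx_lt)
  have xl: "h*dB + k mod dB < ?d" using assms(2) km by (rule idx_lt)
  have "psi (istar g h k) = Cm $$ (h*dB + k mod dB, g*dB + k div dB)"
    unfolding psi_def istar_def using xl by (simp only: divmod_aux)
  also have "\<dots> = (\<Sum>m<dA. b m $ h * cnj (b m $ g) * U m $$ (k mod dB, k div dB))"
    using Cm_index[OF xl ql] kd km by simp
  finally show ?thesis unfolding um_def by (simp add: mult_ac)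
qed

end

context ctrlsys begin

lemma qsig0: assumes Q: "lin_map dB Q"
  shows "qff ((dA*dB)*(dA*dB)) (ent (SIGQ Q)) psi
     = complex_of_real (1 / real (dA*dB)) * (\<Sum>m<dA. qff (dB*dB) (ent (Jm Q dB)) (um m))"
proof -
  let ?n = "(dA*dB)*(dA*dB)"
  let ?c = "complex_of_real (1 / real (dA*dB))"
  define S where "S g h i j = (\<Sum>k<dB*dB. \<Sum>l<dB*dB. A2 g h i k * ent (Jm Q dB) k l * cnj (A2 g h j l))" for g h i j
  define \<beta> where "\<beta> g h m = b m $ h * cnj (b m $ g)" for g h m
  have "qff ?n (ent (SIGQ Q)) psi = qff ?n (\<lambda>i j. \<Sum>g<dA. \<Sum>h<dA. ?c * S g h i j) psi"
    by (rule qff_cong_F) (simp only: ent_def S_def sig0_sand[OF Q])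
  also have "\<dots> = (\<Sum>g<dA. \<Sum>h<dA. ?c * qff ?n (S g h) psi)"
    by (simp only: qff_sum qff_scale)
  also have "\<dots> = (\<Sum>g<dA. \<Sum>h<dA. ?c * qff (dB*dB) (ent (Jm Q dB)) (\<lambda>k. \<Sum>m<dA. \<beta> g h m * um m k))"
  proof (intro sum.cong refl)
    fix g h assume gh: "g \<in> {..<dA}" "h \<in> {..<dA}"
    have "qff ?n (S g h) psi = qff (dB*dB) (ent (Jm Q dB)) (\<lambda>k. \<Sum>i<?n. cnj (A2 g h i k) * psi i)"
      unfolding S_def by (rule qff_sandwich)
    also have "\<dots> = qff (dB*dB) (ent (Jm Q dB)) (\<lambda>k. \<Sum>m<dA. \<beta> g h m * um m k)"
      unfolding \<beta>_def using gh by (intro qff_cong_v) (simp add: w_eq psi_istar)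
    finally show "?c * qff ?n (S g h) psi = ?c * qff (dB*dB) (ent (Jm Q dB)) (\<lambda>k. \<Sum>m<dA. \<beta> g h m * um m k)"
      by simp
  qed
  also have "\<dots> = ?c * (\<Sum>g<dA. \<Sum>h<dA. qff (dB*dB) (ent (Jm Q dB)) (\<lambda>k. \<Sum>m<dA. \<beta> g h m * um m k))"
    by (simp add: sum_distrib_left)
  also have "(\<Sum>g<dA. \<Sum>h<dA. qff (dB*dB) (ent (Jm Q dB)) (\<lambda>k. \<Sum>m<dA. \<beta> g h m * um m k))
      = (\<Sum>m<dA. qff (dB*dB) (ent (Jm Q dB)) (um m))"
  proof (rule gram_expand)
    fix m m' assume mm: "m < dA" "m' < dA"
    have "(\<Sum>g<dA. \<Sum>h<dA. cnj (\<beta> g h m) * \<beta> g h m')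
        = (\<Sum>g<dA. \<Sum>h<dA. (b m' $ h * cnj (b m $ h)) * (b m $ g * cnj (b m' $ g)))"
      unfolding \<beta>_def by (intro sum.cong refl) (simp add: mult_ac)
    also have "\<dots> = (\<Sum>g<dA. b m $ g * cnj (b m' $ g)) * (\<Sum>h<dA. b m' $ h * cnj (b m $ h))"
      by (subst sum_product) (simp add: mult_ac)
    also have "\<dots> = (if m = m' then 1 else 0)" using mm by (simp add: onb_sum)
    finally show "(\<Sum>g<dA. \<Sum>h<dA. cnj (\<beta> g h m) * \<beta> g h m') = (if m = m' then 1 else 0)" .
  qed
  finally show ?thesis .
qed

lemma um_orth:
  assumes H: "\<forall>i < dA. \<forall>j < dA. i \<noteq> j \<longrightarrow> mtrace (adj (U i) * U j) = 0"
    and mm: "m < dA" "m' < dA"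
  shows "(\<Sum>k<dB*dB. cnj (um m k) * um m' k) = (if m = m' then complex_of_real (real dB) else 0)"
proof -
  have "(\<Sum>k<dB*dB. cnj (um m k) * um m' k) = (\<Sum>s<dB. \<Sum>q<dB. cnj (U m $$ (q,s)) * U m' $$ (q,s))"
    unfolding um_def by (subst sum_split) (intro sum.cong refl, simp)
  also have "\<dots> = (if m = m' then complex_of_real (real dB) else 0)"
  proof (cases "m = m'")
    case True
    then have "(\<Sum>s<dB. \<Sum>q<dB. cnj (U m $$ (q,s)) * U m' $$ (q,s)) = (\<Sum>s<dB. 1)"
      using mm by (intro sum.cong refl) (simp add: unitary_cols Uun)
    then show ?thesis using True by simp
  next
    case False
    have C: "U m \<in> carrier_mat dB dB" "U m' \<in> carrier_mat dB dB" using mm Ucar by auto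
    have "mtrace (adj (U m) * U m') = (\<Sum>s<dB. \<Sum>q<dB. cnj (U m $$ (q,s)) * U m' $$ (q,s))"
      unfolding mtrace_def using C
      by (intro sum.cong) (auto simp: scalar_prod_def atLeast0LessThan row_def col_def)
    then show ?thesis using H mm False by simp
  qed
  finally show ?thesis .
qed

lemma trJ: assumes Q: "channel dB Q" shows "(\<Sum>k<dB*dB. ent (Jm Q dB) k k) = of_nat dB"
proof -
  have L: "lin_map dB Q" and T: "\<And>X. X \<in> carrier_mat dB dB \<Longrightarrow> mtrace (Q X) = mtrace X"
    using Q unfolding channel_def by auto
  have "(\<Sum>k<dB*dB. ent (Jm Q dB) k k) = (\<Sum>s<dB. \<Sum>q<dB. ent (Jm Q dB) (s*dB+q) (s*dB+q))"
    by (rule sum_split)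
  also have "\<dots> = (\<Sum>s<dB. \<Sum>q<dB. Q (eunit dB s s) $$ (q,q))"
  proof (intro sum.cong refl)
    fix s q assume sq: "s \<in> {..<dB}" "q \<in> {..<dB}"
    then have lt: "s*dB+q < dB*dB" by (intro idx_lt) auto
    show "ent (Jm Q dB) (s*dB+q) (s*dB+q) = Q (eunit dB s s) $$ (q,q)"
      unfolding ent_def using J_entry[OF L lt lt] sq by simp
  qed
  also have "\<dots> = (\<Sum>s<dB. mtrace (Q (eunit dB s s)))"
  proof (rule sum.cong[OF refl])
    fix s
    have "dim_row (Q (eunit dB s s)) = dB" using lin_map_carrier[OF L eunit_carrier] by (rule carrier_matD)
    then show "(\<Sum>q<dB. Q (eunit dB s s) $$ (q,q)) = mtrace (Q (eunit dB s s))" unfolding mtrace_def by simp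
  qed
  also have "\<dots> = (\<Sum>s<dB. 1)"
    by (intro sum.cong refl) (simp add: T eunit_carrier mtrace_eunit)
  finally show ?thesis by simp
qed

lemma Jbound:
  assumes Q: "channel dB Q" and dB1: "dB \<ge> 1"
    and H: "\<forall>i < dA. \<forall>j < dA. i \<noteq> j \<longrightarrow> mtrace (adj (U i) * U j) = 0"
  shows "(\<Sum>m<dA. qff (dB*dB) (ent (Jm Q dB)) (um m)) \<le> complex_of_real (real dB * real dB)"
proof -
  have pos: "\<And>f. 0 \<le> qff (dB*dB) (ent (Jm Q dB)) f" using J_psd[OF Q] unfolding psd_iff by blast
  have "(\<Sum>m<dA. qff (dB*dB) (ent (Jm Q dB)) (um m)) \<le> complex_of_real (real dB) * (\<Sum>x<dB*dB. ent (Jm Q dB) x x)"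
    by (rule trace_bound[OF pos]) (use H dB1 in \<open>simp_all add: um_orth\<close>)
  then show ?thesis using trJ[OF Q] by simp
qed

end

context ctrlsys begin

lemma part2_Dmax:
  assumes dA1: "dA \<ge> 1" and dB1: "dB \<ge> 1" and Q: "channel dB Q"
    and H: "\<forall>i < dA. \<forall>j < dA. i \<noteq> j \<longrightarrow> mtrace (adj (U i) * U j) = 0"
  shows "ereal (2 * log 2 (real dA)) \<le> Dmax ((dA*dB)*(dA*dB)) (TAU (dA*dB) RHO0) (SIGQ Q)"
proof -
  let ?d = "dA*dB"
  let ?n = "(dA*dB)*(dA*dB)"
  let ?c = "complex_of_real (1 / real (dA*dB))"
  define L where "L = {l::real. psd ?n (complex_of_real l \<cdot>\<^sub>m SIGQ Q - TAU ?d RHO0)}"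
  have Lm: "lin_map dB Q" using Q unfolding channel_def by blast
  show ?thesis
  proof (cases "L = {}")
    case True
    then show ?thesis unfolding Dmax_def Let_def L_def[symmetric] by simp
  next
    case ne: False
    define S where "S = (\<Sum>m<dA. qff (dB*dB) (ent (Jm Q dB)) (um m))"
    have pos: "\<And>f. 0 \<le> qff (dB*dB) (ent (Jm Q dB)) f" using J_psd[OF Q] unfolding psd_iff by blast
    have S0: "0 \<le> S" unfolding S_def by (intro sum_nonneg pos)
    have S1: "S \<le> complex_of_real (real dB * real dB)" unfolding S_def by (rule Jbound[OF Q dB1 H])
    define s where "s = Re S"
    have Ss: "S = complex_of_real s" using S0 unfolding s_def by (simp add: less_eq_complex_def complex_eq_iff)
    have s0: "0 \<le> s" and s1: "s \<le> real dB * real dB" using S0 S1 unfolding Ss by (auto simp: less_eq_complex_def)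
    have dpos: "real ?d > 0" using dA1 dB1 by simp
    have low: "(real dA)^2 \<le> l" if l: "l \<in> L" for l
    proof -
      have P: "psd ?n (complex_of_real l \<cdot>\<^sub>m SIGQ Q - TAU ?d RHO0)" using l unfolding L_def by blast
      have e: "ent (complex_of_real l \<cdot>\<^sub>m SIGQ Q - TAU ?d RHO0) i j = complex_of_real l * ent (SIGQ Q) i j - ent (TAU ?d RHO0) i j"
        if "i < ?n" "j < ?n" for i j
        using that TAU_carrier[of ?d RHO0] SIG_carrier[of ?d RHO0] RQ_carrier
        unfolding map_tensor_def by (simp add: ent_def msum_def)
      have "0 \<le> qff ?n (ent (complex_of_real l \<cdot>\<^sub>m SIGQ Q - TAU ?d RHO0)) psi" using P unfolding psd_iff by blast
      also have "qff ?n (ent (complex_of_real l \<cdot>\<^sub>m SIGQ Q - TAU ?d RHO0)) psi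
          = qff ?n (\<lambda>i j. complex_of_real l * ent (SIGQ Q) i j - ent (TAU ?d RHO0) i j) psi"
        by (rule qff_cong_F) (metis e)
      also have "\<dots> = complex_of_real l * qff ?n (ent (SIGQ Q)) psi - qff ?n (ent (TAU ?d RHO0)) psi"
        by (simp only: qff_diff qff_scale)
      also have "\<dots> = complex_of_real (l * (1 / real ?d) * s - real ?d)"
        unfolding qsig0[OF Lm] qtau0 S_def[symmetric] Ss by simp
      finally have r: "0 \<le> l * (1 / real ?d) * s - real ?d" by (simp add: less_eq_complex_def)
      have ls: "real ?d * real ?d \<le> l * s"
      proof -
        have "real ?d * real ?d \<le> real ?d * (l * (1 / real ?d) * s)"
          using r dpos by (intro mult_left_mono) auto
        also have "\<dots> = l * s" using dA1 dB1 by (simp add: field_simps)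
        finally show ?thesis .
      qed
      show ?thesis
      proof (rule ccontr)
        assume "\<not> (real dA)^2 \<le> l"
        then have lt: "l < (real dA)^2" by simp
        show False
        proof (cases "l \<le> 0")
          case True
          then have "l * s \<le> 0" using s0 by (simp add: mult_nonpos_nonneg)
          then show False using ls dpos by (smt (verit) mult_pos_pos)
        next
          case False
          then have "l * s \<le> l * (real dB * real dB)" using s1 by (intro mult_left_mono) auto
          also have "\<dots> < (real dA)^2 * (real dB * real dB)"
            using lt dB1 by (intro mult_strict_right_mono) auto
          also have "\<dots> = real ?d * real ?d" by (simp add: power2_eq_square)
          finally show False using ls by simp
        qed
      qed
    qed
    have i2: "(real dA)^2 \<le> Inf L" using cInf_greatest[OF ne] low by blast
    have "2 * log 2 (real dA) = log 2 ((real dA)^2)" using dA1 by (simp add: log_nat_power)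
    also have "\<dots> \<le> log 2 (Inf L)" using i2 dA1 by (intro log_mono) auto
    finally have "2 * log 2 (real dA) \<le> log 2 (Inf L)" .
    moreover have "Dmax ?n (TAU ?d RHO0) (SIGQ Q) = ereal (log 2 (Inf L))"
      unfolding Dmax_def Let_def L_def[symmetric] using ne by simp
    ultimately show ?thesis by simp
  qed
qed

lemma part2:
  assumes dA1: "dA \<ge> 1" and dB1: "dB \<ge> 1"
    and H: "\<forall>i < dA. \<forall>j < dA. i \<noteq> j \<longrightarrow> mtrace (adj (U i) * U j) = 0"
  shows "cond_min_entropy dA dB (ctrl_channel dA dB b U) \<le> ereal (- 2 * log 2 (real dA))"
proof -
  let ?N = "ctrl_channel dA dB b U"
  let ?d = "dA*dB"
  have dpos: "?d > 0" using dA1 dB1 by simp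
  have dens: "density (?d * ?d) RHO0"
    unfolding density_def using projm_psd[of "1 / real ?d" ?d] projm_trace[OF dpos] by simp
  have "ereal (2 * log 2 (real dA)) \<le> (INF Q\<in>{Q. channel dB Q}. Dmax_ch ?d ?N (map_tensor (repl_id dA) Q dA dB))"
  proof (rule INF_greatest)
    fix Q assume "Q \<in> {Q. channel dB Q}"
    then have Q: "channel dB Q" by simp
    have "ereal (2 * log 2 (real dA)) \<le> Dmax (?d*?d) (TAU ?d RHO0) (SIGQ Q)"
      by (rule part2_Dmax[OF dA1 dB1 Q H])
    also have "\<dots> \<le> Dmax_ch ?d ?N (map_tensor (repl_id dA) Q dA dB)"
      unfolding Dmax_ch_def
      using SUP_upper[of "(?d, RHO0)" "{(r, \<rho>). density (r * ?d) \<rho>}"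
          "\<lambda>p. Dmax (fst p * ?d) (map_tensor (\<lambda>Y. Y) ?N (fst p) ?d (snd p))
                       (map_tensor (\<lambda>Y. Y) (map_tensor (repl_id dA) Q dA dB) (fst p) ?d (snd p))"] dens
      by simp
    finally show "ereal (2 * log 2 (real dA)) \<le> Dmax_ch ?d ?N (map_tensor (repl_id dA) Q dA dB)" .
  qed
  then have "- (INF Q\<in>{Q. channel dB Q}. Dmax_ch ?d ?N (map_tensor (repl_id dA) Q dA dB)) \<le> - ereal (2 * log 2 (real dA))"
    by (simp only: ereal_minus_le_minus)
  then show ?thesis unfolding cond_min_entropy_def by simp
qed

end

theorem proposition14:
  fixes dA dB :: nat and b :: "nat \<Rightarrow> complex vec" and U :: "nat \<Rightarrow> complex mat"
  assumes dA: "1 \<le> dA" and dB: "1 \<le> dB"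
    and onb: "\<forall>i < dA. \<forall>j < dA. b i \<in> carrier_vec dA \<and> b i \<bullet>c b j = (if i = j then 1 else 0)"
    and unit: "\<forall>j < dA. unitary dB (U j)"
  shows "cond_min_entropy dA dB (ctrl_channel dA dB b U) \<ge> ereal (- 2 * log 2 (real dA)) \<and>
         ((\<forall>i < dA. \<forall>j < dA. i \<noteq> j \<longrightarrow> mtrace (adj (U i) * U j) = 0) \<longrightarrow>
          cond_min_entropy dA dB (ctrl_channel dA dB b U) = ereal (- 2 * log 2 (real dA)))"
proof -
  interpret ctrlsys dA dB b U using onb unit by unfold_locales
  have p1: "cond_min_entropy dA dB (ctrl_channel dA dB b U) \<ge> ereal (- 2 * log 2 (real dA))"
    using part1[OF dA] .
  show ?thesis
  proof (intro conjI impI)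
    show "cond_min_entropy dA dB (ctrl_channel dA dB b U) \<ge> ereal (- 2 * log 2 (real dA))" by (rule p1)
  next
    assume H: "\<forall>i < dA. \<forall>j < dA. i \<noteq> j \<longrightarrow> mtrace (adj (U i) * U j) = 0"
    show "cond_min_entropy dA dB (ctrl_channel dA dB b U) = ereal (- 2 * log 2 (real dA))"
      using p1 part2[OF dA dB H] by (rule antisym[rotated])
  qed
qed

end
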